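(* Let $A:\mathbb{R}^n\to\mathbb{R}^n$ be a nonsingular linear operator that is GSR (respectively, GSSR). Then $A^{-1}$ is GSR (respectively, GSSR). In particular, if $A$ is nonsingular and GTP (respectively, GSTP), then $A^{-1}$ is GTP (respectively, GSTP). Here each of these properties is understood with respect to some totally positive structure.
   Context: A proper cone is a closed convex cone that is pointed and solid. $\wedge^j\mathbb{R}^n$ is the $j$th exterior power and $\wedge^jA$ the operator with $(\wedge^jA)(x_1\wedge\cdots\wedge x_j)=Ax_1\wedge\cdots\wedge Ax_j$. $B$ is $K$-nonnegative if $BK\subseteq K$ and $K$-positive if $B(K\setminus\{0\})\subseteq\operatorname{int}K$. A totally positive structure is a family $\{K_1,\ldots,K_n\}$, $K_j\subset\wedge^j\mathbb{R}^n$ a proper cone. With respect to it, $A$ is GTP (GSTP) if $\wedge^jA$ is $K_j$-nonnegative ($K_j$-positive) for all $j=1,\ldots,n$, and GSR (GSSR) if there exist $\epsilon_1,\ldots,\epsilon_n\in\{\pm1\}$ with $\epsilon_j\wedge^jA$ $K_j$-nonnegative ($K_j$-positive) for all $j$. *)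

theory Defs
  imports "HOL-Analysis.Analysis" "Jordan_Normal_Form.Determinant" "Jordan_Normal_Form.DL_Submatrix"
begin

text \<open>The j-th exterior power of R^n is
represented in the standard basis e_S = e_s1 wedge ... wedge e_sj (s1 < ... < sj) as the
space of real functions on nat sets that vanish outside the j-element subsets of
{0..<n}.  The operator wedge^j A is then the j-th compound matrix of A, whose (S,T)
entry is the minor det A[S,T] (rows S, columns T, both in increasing order).\<close>

definition ksub :: "nat \<Rightarrow> nat \<Rightarrow> nat set set" where
  "ksub n j = {S. S \<subseteq> {..<n} \<and> card S = j}"

definition ext_space :: "nat \<Rightarrow> nat \<Rightarrow> (nat set \<Rightarrow> real) set" where
  "ext_space n j = {x. \<forall>S. S \<notin> ksub n j \<longrightarrow> x S = 0}"

definition compound :: "nat \<Rightarrow> nat \<Rightarrow> real mat \<Rightarrow> (nat set \<Rightarrow> real) \<Rightarrow> (nat set \<Rightarrow> real)" where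
  "compound n j A x = (\<lambda>S. if S \<in> ksub n j
       then (\<Sum>T\<in>ksub n j. det (submatrix A S T) * x T) else 0)"

definition rel_int :: "nat \<Rightarrow> nat \<Rightarrow> (nat set \<Rightarrow> real) set \<Rightarrow> (nat set \<Rightarrow> real) set" where
  "rel_int n j K = {x\<in>K. \<exists>e>0. \<forall>y\<in>ext_space n j.
       (\<forall>S\<in>ksub n j. \<bar>y S - x S\<bar> < e) \<longrightarrow> y \<in> K}"

definition proper_cone :: "nat \<Rightarrow> nat \<Rightarrow> (nat set \<Rightarrow> real) set \<Rightarrow> bool" where
  "proper_cone n j K \<longleftrightarrow>
     K \<subseteq> ext_space n j \<and>
     (\<forall>x\<in>K. \<forall>y\<in>K. \<forall>a\<ge>0. \<forall>b\<ge>0. (\<lambda>S. a * x S + b * y S) \<in> K) \<and>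
     closed K \<and>
     (\<forall>x\<in>K. (\<lambda>S. - x S) \<in> K \<longrightarrow> x = (\<lambda>_. 0)) \<and>
     rel_int n j K \<noteq> {}"

definition K_nonneg :: "(nat set \<Rightarrow> real) set \<Rightarrow> ((nat set \<Rightarrow> real) \<Rightarrow> (nat set \<Rightarrow> real)) \<Rightarrow> bool" where
  "K_nonneg K B \<longleftrightarrow> (\<forall>x\<in>K. B x \<in> K)"

definition K_pos :: "nat \<Rightarrow> nat \<Rightarrow> (nat set \<Rightarrow> real) set \<Rightarrow> ((nat set \<Rightarrow> real) \<Rightarrow> (nat set \<Rightarrow> real)) \<Rightarrow> bool" where
  "K_pos n j K B \<longleftrightarrow> (\<forall>x\<in>K - {\<lambda>_. 0}. B x \<in> rel_int n j K)"

definition tp_structure :: "nat \<Rightarrow> (nat \<Rightarrow> (nat set \<Rightarrow> real) set) \<Rightarrow> bool" where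
  "tp_structure n Ks \<longleftrightarrow> (\<forall>j\<in>{1..n}. proper_cone n j (Ks j))"

definition GTP :: "nat \<Rightarrow> (nat \<Rightarrow> (nat set \<Rightarrow> real) set) \<Rightarrow> real mat \<Rightarrow> bool" where
  "GTP n Ks A \<longleftrightarrow> (\<forall>j\<in>{1..n}. K_nonneg (Ks j) (compound n j A))"

definition GSTP :: "nat \<Rightarrow> (nat \<Rightarrow> (nat set \<Rightarrow> real) set) \<Rightarrow> real mat \<Rightarrow> bool" where
  "GSTP n Ks A \<longleftrightarrow> (\<forall>j\<in>{1..n}. K_pos n j (Ks j) (compound n j A))"

definition GSR :: "nat \<Rightarrow> (nat \<Rightarrow> (nat set \<Rightarrow> real) set) \<Rightarrow> real mat \<Rightarrow> bool" where
  "GSR n Ks A \<longleftrightarrow> (\<exists>\<epsilon>::nat \<Rightarrow> real. \<forall>j\<in>{1..n}. \<epsilon> j \<in> {-1, 1} \<and>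
       K_nonneg (Ks j) (\<lambda>x S. \<epsilon> j * compound n j A x S))"

definition GSSR :: "nat \<Rightarrow> (nat \<Rightarrow> (nat set \<Rightarrow> real) set) \<Rightarrow> real mat \<Rightarrow> bool" where
  "GSSR n Ks A \<longleftrightarrow> (\<exists>\<epsilon>::nat \<Rightarrow> real. \<forall>j\<in>{1..n}. \<epsilon> j \<in> {-1, 1} \<and>
       K_pos n j (Ks j) (\<lambda>x S. \<epsilon> j * compound n j A x S))"

end

theory Submission
  imports Defs
begin


lemma pick_transfer:
  fixes g :: "nat \<Rightarrow> nat"
  assumes g: "strict_mono g" and XY: "g ` X = Y" and k: "k < card X \<or> infinite X"
  shows "g (pick X k) = pick Y k"
proof -
  let ?x = "pick X k"
  have xX: "?x \<in> X" using pick_in_set[OF k] .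
  have "{a\<in>Y. a < g ?x} = g ` {a\<in>X. a < ?x}"
    using XY g by (auto simp: strict_mono_less)
  then have "card {a\<in>Y. a < g ?x} = card {a\<in>X. a < ?x}"
    using strict_mono_imp_inj_on[OF g] by (simp add: card_image inj_on_subset)
  also have "\<dots> = k" using card_pick[OF k] .
  finally have ck: "card {a\<in>Y. a < g ?x} = k" .
  have "pick Y (card {a\<in>Y. a < g ?x}) = g ?x"
    using pick_card_in_set[of "g ?x" Y] XY xX by auto
  then show ?thesis using ck by simp
qed

lemma submatrix_cong_sets:
  assumes "{i. i < dim_row M \<and> i \<in> I} = {i. i < dim_row M \<and> i \<in> I'}"
      and "{j. j < dim_col M \<and> j \<in> J} = {j. j < dim_col M \<and> j \<in> J'}"
  shows "submatrix M I J = submatrix M I' J'"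
proof (rule eq_matI)
  show "dim_row (submatrix M I J) = dim_row (submatrix M I' J')"
    using assms by (simp add: dim_submatrix)
  show "dim_col (submatrix M I J) = dim_col (submatrix M I' J')"
    using assms by (simp add: dim_submatrix)
  fix i j assume "i < dim_row (submatrix M I' J')" "j < dim_col (submatrix M I' J')"
  then have ij: "i < card {i. i < dim_row M \<and> i \<in> I'}" "j < card {j. j < dim_col M \<and> j \<in> J'}"
    by (simp_all add: dim_submatrix)
  then have ij': "i < card {i. i < dim_row M \<and> i \<in> I}" "j < card {j. j < dim_col M \<and> j \<in> J}"
    using assms by simp_all
  have "pick I i = pick I' i" using pick_reduce_set[OF ij'(1)] pick_reduce_set[OF ij(1)] assms(1) by simp
  moreover have "pick J j = pick J' j" using pick_reduce_set[OF ij'(2)] pick_reduce_set[OF ij(2)] assms(2) by simp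
  ultimately show "submatrix M I J $$ (i, j) = submatrix M I' J' $$ (i, j)"
    using submatrix_index[OF ij] submatrix_index[OF ij'] by simp
qed

lemma submatrix_UNIV: "submatrix M UNIV UNIV = M"
  by (rule eq_matI) (auto simp: dim_submatrix submatrix_index pick_UNIV)

lemma card_compl_lt:
  assumes "R \<subseteq> {..<n}"
  shows "card {i. i < n \<and> i \<in> - R} = n - card R"
proof -
  have "{i. i < n \<and> i \<in> - R} = {..<n} - R" by auto
  then show ?thesis using assms by (simp add: card_Diff_subset finite_subset)
qed

lemma unit_cols_det:
  assumes "M \<in> carrier_mat n n" "U \<subseteq> {..<n}" "R \<subseteq> {..<n}" "card U = k" "card R = k"
    and "\<And>c i. c \<in> U \<Longrightarrow> i < n \<Longrightarrow> M $$ (i, c) = (if i = pick R (card {a\<in>U. a < c}) then 1 else 0)"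
  shows "det M = (-1) ^ (\<Sum>R + \<Sum>U) * det (submatrix M (- R) (- U))"
  using assms
proof (induction k arbitrary: n M U R)
  case 0
  then have "U = {}" "R = {}" using finite_subset[of _ "{..<n}"] by auto
  then show ?case by (simp add: submatrix_UNIV)
next
  case (Suc k)
  have fU: "finite U" using Suc.prems(2) by (meson finite_lessThan finite_subset)
  have fR: "finite R" using Suc.prems(3) by (meson finite_lessThan finite_subset)
  have neU: "U \<noteq> {}" and neR: "R \<noteq> {}" using Suc.prems by auto
  define u where "u = Max U"
  define r where "r = Max R"
  have uU: "u \<in> U" and rR: "r \<in> R" using fU fR neU neR u_def r_def by auto
  have un: "u < n" using uU Suc.prems(2) by auto
  have rn: "r < n" using rR Suc.prems(3) by auto
  obtain n' where n': "n = Suc n'" using un by (cases n) auto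
  have ubig: "c < u" if "c \<in> U" "c \<noteq> u" for c using that fU u_def
    by (metis Max_ge order_le_neq_trans)
  have rbig: "c < r" if "c \<in> R" "c \<noteq> r" for c using that fR r_def
    by (metis Max_ge order_le_neq_trans)
  define U' where "U' = U - {u}"
  define R' where "R' = R - {r}"
  have cU': "card U' = k" using Suc.prems uU fU by (simp add: U'_def)
  have cR': "card R' = k" using Suc.prems rR fR by (simp add: R'_def)
  have cardbelow_u: "card {a\<in>U. a < u} = k"
  proof -
    have "{a\<in>U. a < u} = U'" using ubig by (auto simp: U'_def)
    then show ?thesis using cU' by simp
  qed
  have cardbelow_r: "card {a\<in>R. a < r} = k"
  proof -
    have "{a\<in>R. a < r} = R'" using rbig by (auto simp: R'_def)
    then show ?thesis using cR' by simp
  qed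
  have piu: "pick R k = r" using pick_card_in_set[OF rR] cardbelow_r by simp
  have colu: "M $$ (i, u) = (if i = r then 1 else 0)" if "i < n" for i
    using Suc.prems(6)[OF uU that] cardbelow_u piu by simp
  have "det M = (\<Sum>i<n. M $$ (i, u) * cofactor M i u)"
    by (rule laplace_expansion_column[OF Suc.prems(1) un])
  also have "\<dots> = (\<Sum>i<n. if i = r then cofactor M i u else 0)"
    by (rule sum.cong) (auto simp: colu)
  also have "\<dots> = cofactor M r u" using rn by simp
  finally have detM: "det M = (-1)^(r+u) * det (mat_delete M r u)" by (simp add: cofactor_def)
  define M' where "M' = mat_delete M r u"
  have M'c: "M' \<in> carrier_mat n' n'" using mat_delete_carrier[OF Suc.prems(1)] n' by (simp add: M'_def)
  have M'idx: "M' $$ (i, c) = M $$ (if i < r then i else Suc i, if c < u then c else Suc c)"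
    if "i < n'" "c < n'" for i c
    using that Suc.prems(1) n' by (simp add: M'_def mat_delete_def)
  have U'sub: "U' \<subseteq> {..<n'}"
  proof
    fix x assume "x \<in> U'" then have "x < u" using ubig U'_def by auto
    then show "x \<in> {..<n'}" using un n' by simp
  qed
  have R'sub: "R' \<subseteq> {..<n'}"
  proof
    fix x assume "x \<in> R'" then have "x < r" using rbig R'_def by auto
    then show "x \<in> {..<n'}" using rn n' by simp
  qed
  have pickR: "pick R m = pick R' m" if "m < k" for m
  proof -
    have e: "{a. a < r \<and> a \<in> R} = {a. a < r \<and> a \<in> R'}" by (auto simp: R'_def)
    have c1: "m < card {a. a < r \<and> a \<in> R}" using cardbelow_r that by (simp add: conj_commute)
    then have c2: "m < card {a. a < r \<and> a \<in> R'}" using e by simp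
    show ?thesis using pick_reduce_set[OF c1] pick_reduce_set[OF c2] e by simp
  qed
  have hypM': "M' $$ (i, c) = (if i = pick R' (card {a\<in>U'. a < c}) then 1 else 0)"
    if c: "c \<in> U'" and i: "i < n'" for c i
  proof -
    have cu: "c < u" using c ubig by (auto simp: U'_def)
    have cn: "c < n'" using c U'sub by auto
    have ceq: "card {a\<in>U'. a < c} = card {a\<in>U. a < c}"
      using cu by (intro arg_cong[where f=card]) (auto simp: U'_def)
    have klt: "card {a\<in>U'. a < c} < k"
    proof -
      have "{a\<in>U'. a < c} \<subset> U'" using c by auto
      then show ?thesis using cU' fU by (metis U'_def finite_Diff psubset_card_mono)
    qed
    have pin: "pick R' (card {a\<in>U'. a < c}) \<in> R'" using pick_in_set[of "card {a\<in>U'. a < c}" R'] klt cR' by simp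
    then have plt: "pick R' (card {a\<in>U'. a < c}) < r" using rbig by (auto simp: R'_def)
    have "M' $$ (i, c) = M $$ (if i < r then i else Suc i, c)" using M'idx[OF i cn] cu by simp
    also have "\<dots> = (if (if i < r then i else Suc i) = pick R (card {a\<in>U. a < c}) then 1 else 0)"
      using Suc.prems(6)[of c "if i < r then i else Suc i"] c i n' by (auto simp: U'_def)
    also have "\<dots> = (if i = pick R' (card {a\<in>U'. a < c}) then 1 else 0)"
      using pickR[OF klt] ceq plt by auto
    finally show ?thesis .
  qed
  have IH: "det M' = (-1) ^ (\<Sum>R' + \<Sum>U') * det (submatrix M' (- R') (- U'))"
    by (rule Suc.IH[OF M'c U'sub R'sub cU' cR' hypM'])
  define shr where "shr i = (if i < r then i else Suc i)" for i
  define shu where "shu i = (if i < u then i else Suc i)" for i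
  have smr: "strict_mono shr" unfolding shr_def strict_mono_def by auto
  have smu: "strict_mono shu" unfolding shu_def strict_mono_def by auto
  have imr: "shr ` (- R') = - R"
  proof
    show "shr ` (- R') \<subseteq> - R"
    proof
      fix z assume "z \<in> shr ` (- R')"
      then obtain x where x: "x \<notin> R'" "z = shr x" by auto
      show "z \<in> - R"
      proof (cases "x < r")
        case True
        then have "z = x" "x \<noteq> r" using x by (auto simp: shr_def)
        then show ?thesis using x by (auto simp: R'_def)
      next
        case False
        then have "z = Suc x" "r < z" using x by (auto simp: shr_def)
        then show ?thesis using rbig by fastforce
      qed
    qed
    show "- R \<subseteq> shr ` (- R')"
    proof
      fix x assume x: "x \<in> - R"
      show "x \<in> shr ` (- R')"
      proof (cases "x < r")
        case True then show ?thesis using x by (auto simp: shr_def R'_def image_iff intro!: bexI[of _ x])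
      next
        case False
        then have "x > r" using x rR by (cases "x = r") auto
        then obtain y where "x = Suc y" "y \<ge> r" by (cases x) auto
        moreover have "y \<in> - R'" using \<open>y \<ge> r\<close> rbig by (force simp: R'_def)
        ultimately show ?thesis by (auto simp: shr_def image_iff intro!: bexI[of _ y])
      qed
    qed
  qed
  have imu: "shu ` (- U') = - U"
  proof
    show "shu ` (- U') \<subseteq> - U"
    proof
      fix z assume "z \<in> shu ` (- U')"
      then obtain x where x: "x \<notin> U'" "z = shu x" by auto
      show "z \<in> - U"
      proof (cases "x < u")
        case True
        then have "z = x" "x \<noteq> u" using x by (auto simp: shu_def)
        then show ?thesis using x by (auto simp: U'_def)
      next
        case False
        then have "z = Suc x" "u < z" using x by (auto simp: shu_def)
        then show ?thesis using ubig by fastforce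
      qed
    qed
    show "- U \<subseteq> shu ` (- U')"
    proof
      fix x assume x: "x \<in> - U"
      show "x \<in> shu ` (- U')"
      proof (cases "x < u")
        case True then show ?thesis using x by (auto simp: shu_def U'_def image_iff intro!: bexI[of _ x])
      next
        case False
        then have "x > u" using x uU by (cases "x = u") auto
        then obtain y where "x = Suc y" "y \<ge> u" by (cases x) auto
        moreover have "y \<in> - U'" using \<open>y \<ge> u\<close> ubig by (force simp: U'_def)
        ultimately show ?thesis by (auto simp: shu_def image_iff intro!: bexI[of _ y])
      qed
    qed
  qed
  have infR': "infinite (- R')" using R'sub finite_subset[OF R'sub] by (metis Compl_eq_Diff_UNIV finite_Diff2 finite_lessThan infinite_UNIV_nat)
  have infU': "infinite (- U')" using U'sub finite_subset[OF U'sub] by (metis Compl_eq_Diff_UNIV finite_Diff2 finite_lessThan infinite_UNIV_nat)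
  have cr1: "card {i. i < n' \<and> i \<in> - R'} = n' - k" using card_compl_lt[OF R'sub] cR' by simp
  have cr2: "card {i. i < n \<and> i \<in> - R} = n' - k" using card_compl_lt[OF Suc.prems(3)] Suc.prems(5) n' by simp
  have cu1: "card {i. i < n' \<and> i \<in> - U'} = n' - k" using card_compl_lt[OF U'sub] cU' by simp
  have cu2: "card {i. i < n \<and> i \<in> - U} = n' - k" using card_compl_lt[OF Suc.prems(2)] Suc.prems(4) n' by simp
  have subeq: "submatrix M' (- R') (- U') = submatrix M (- R) (- U)"
  proof (rule eq_matI)
    show "dim_row (submatrix M' (- R') (- U')) = dim_row (submatrix M (- R) (- U))"
      using M'c Suc.prems(1) cr1 cr2 by (simp add: dim_submatrix)
    show "dim_col (submatrix M' (- R') (- U')) = dim_col (submatrix M (- R) (- U))"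
      using M'c Suc.prems(1) cu1 cu2 by (simp add: dim_submatrix)
    fix a b assume "a < dim_row (submatrix M (- R) (- U))" "b < dim_col (submatrix M (- R) (- U))"
    then have ab: "a < n' - k" "b < n' - k" using Suc.prems(1) cr2 cu2 by (simp_all add: dim_submatrix)
    have a1: "a < card {i. i < dim_row M' \<and> i \<in> - R'}" using ab M'c cr1 by simp
    have b1: "b < card {i. i < dim_col M' \<and> i \<in> - U'}" using ab M'c cu1 by simp
    have a2: "a < card {i. i < dim_row M \<and> i \<in> - R}" using ab Suc.prems(1) cr2 by simp
    have b2: "b < card {i. i < dim_col M \<and> i \<in> - U}" using ab Suc.prems(1) cu2 by simp
    have pa: "pick (- R') a < n'" using pick_le[of a n' "- R'"] ab cr1 by (simp add: conj_commute)
    have pb: "pick (- U') b < n'" using pick_le[of b n' "- U'"] ab cu1 by (simp add: conj_commute)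
    have "submatrix M' (- R') (- U') $$ (a, b) = M' $$ (pick (- R') a, pick (- U') b)"
      by (rule submatrix_index[OF a1 b1])
    also have "\<dots> = M $$ (shr (pick (- R') a), shu (pick (- U') b))"
      using M'idx[OF pa pb] by (simp add: shr_def shu_def)
    also have "\<dots> = M $$ (pick (- R) a, pick (- U) b)"
      using pick_transfer[OF smr imr] pick_transfer[OF smu imu] infR' infU' by simp
    also have "\<dots> = submatrix M (- R) (- U) $$ (a, b)"
      by (rule submatrix_index[OF a2 b2, symmetric])
    finally show "submatrix M' (- R') (- U') $$ (a, b) = submatrix M (- R) (- U) $$ (a, b)" .
  qed
  have sR: "\<Sum>R = \<Sum>R' + r" using rR fR by (simp add: R'_def sum.remove)
  have sU: "\<Sum>U = \<Sum>U' + u" using uU fU by (simp add: U'_def sum.remove)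
  have "det M = (-1)^(r+u) * ((-1) ^ (\<Sum>R' + \<Sum>U') * det (submatrix M (- R) (- U)))"
    using detM IH subeq by (simp add: M'_def)
  also have "\<dots> = (-1) ^ (\<Sum>R + \<Sum>U) * det (submatrix M (- R) (- U))"
    by (simp add: sR sU power_add algebra_simps)
  finally show ?case .
qed




definition hs :: "nat \<Rightarrow> nat set \<Rightarrow> real" where
  "hs n X = (-1) ^ (\<Sum>({..<n} - X))"

lemma neg1_sq: "(-1::real)^k * (-1)^k = 1"
  by (induction k) auto

lemma hs_sq[simp]: "hs n X * hs n X = 1"
  unfolding hs_def by (rule neg1_sq)

lemma jacobi:
  fixes A B :: "real mat"
  assumes A: "A \<in> carrier_mat n n" and B: "B \<in> carrier_mat n n" and AB: "A * B = 1\<^sub>m n"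
    and S: "S \<subseteq> {..<n}" and T: "T \<subseteq> {..<n}" and card: "card S = card T"
  shows "det A * (hs n S * hs n T * det (submatrix B S T))
       = det (submatrix A ({..<n} - T) ({..<n} - S))"
proof -
  define R where "R = {..<n} - S"
  define U where "U = {..<n} - T"
  define \<pi> where "\<pi> c = pick R (card {a\<in>U. a < c})" for c
  define Y where "Y = mat n n (\<lambda>(i, c). if c \<in> T then B $$ (i, c) else (if i = \<pi> c then 1 else 0))"
  have Yc: "Y \<in> carrier_mat n n" by (simp add: Y_def)
  have fS: "finite S" using S by (meson finite_lessThan finite_subset)
  have fT: "finite T" using T by (meson finite_lessThan finite_subset)
  have cR: "card R = card U" unfolding R_def U_def using S T card fS fT
    by (simp add: card_Diff_subset)
  have detY: "det Y = (-1) ^ (\<Sum>R + \<Sum>U) * det (submatrix Y (- R) (- U))"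
    by (rule unit_cols_det[OF Yc _ _ refl cR]) (auto simp: R_def U_def Y_def \<pi>_def)
  have rowsS: "{i. i < dim_row Y \<and> i \<in> - R} = {i. i < dim_row Y \<and> i \<in> S}"
    using Yc S by (auto simp: R_def)
  have colsT: "{i. i < dim_col Y \<and> i \<in> - U} = {i. i < dim_col Y \<and> i \<in> T}"
    using Yc T by (auto simp: U_def)
  have subY: "submatrix Y (- R) (- U) = submatrix B S T"
  proof -
    have "submatrix Y (- R) (- U) = submatrix Y S T" by (rule submatrix_cong_sets[OF rowsS colsT])
    also have "\<dots> = submatrix B S T"
    proof (rule eq_matI)
      show "dim_row (submatrix Y S T) = dim_row (submatrix B S T)" using Yc B by (simp add: dim_submatrix)
      show "dim_col (submatrix Y S T) = dim_col (submatrix B S T)" using Yc B by (simp add: dim_submatrix)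
      fix i j assume "i < dim_row (submatrix B S T)" "j < dim_col (submatrix B S T)"
      then have ij: "i < card {i. i < dim_row Y \<and> i \<in> S}" "j < card {j. j < dim_col Y \<and> j \<in> T}"
        and ij': "i < card {i. i < dim_row B \<and> i \<in> S}" "j < card {j. j < dim_col B \<and> j \<in> T}"
        using Yc B by (simp_all add: dim_submatrix)
      have pi: "pick S i < n" using pick_le ij(1) Yc by (simp add: conj_commute)
      have pj: "pick T j < n" using pick_le ij(2) Yc by (simp add: conj_commute)
      have pjT: "pick T j \<in> T"
      proof -
        have "{j. j < dim_col Y \<and> j \<in> T} = T" using T Yc by auto
        then show ?thesis using pick_in_set[of j T] ij(2) by simp
      qed
      show "submatrix Y S T $$ (i, j) = submatrix B S T $$ (i, j)"
        using submatrix_index[OF ij] submatrix_index[OF ij'] pi pj pjT by (simp add: Y_def)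
    qed
    finally show ?thesis .
  qed
  have AYc: "A * Y \<in> carrier_mat n n" using A Yc by simp
  have AYidx: "(A * Y) $$ (i, c) = (if c \<in> T then (if i = c then 1 else 0) else A $$ (i, \<pi> c))"
    if i: "i < n" and c: "c < n" for i c
  proof (cases "c \<in> T")
    case True
    have "(A * Y) $$ (i, c) = (\<Sum>k<n. A $$ (i, k) * B $$ (k, c))"
      using A Yc i c True by (simp add: scalar_prod_def Y_def atLeast0LessThan)
    also have "\<dots> = (A * B) $$ (i, c)" using A B i c by (simp add: scalar_prod_def atLeast0LessThan)
    also have "\<dots> = (if i = c then 1 else 0)" using AB i c by simp
    finally show ?thesis using True by simp
  next
    case False
    have pcn: "\<pi> c < n"
    proof -
      have cU: "c \<in> U" using c False by (simp add: U_def)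
      have fU: "finite U" by (simp add: U_def)
      have "{a\<in>U. a < c} \<subset> U" using cU by auto
      then have "card {a\<in>U. a < c} < card R" using cR fU psubset_card_mono by metis
      then have "\<pi> c \<in> R" unfolding \<pi>_def by (rule pick_in_set[OF disjI1])
      then show ?thesis by (simp add: R_def)
    qed
    have "(A * Y) $$ (i, c) = (\<Sum>k<n. A $$ (i, k) * (if k = \<pi> c then 1 else 0))"
      using A Yc i c False by (simp add: scalar_prod_def Y_def atLeast0LessThan)
    also have "\<dots> = (\<Sum>k<n. if k = \<pi> c then A $$ (i, \<pi> c) else 0)"
      by (rule sum.cong) auto
    also have "\<dots> = A $$ (i, \<pi> c)" using pcn by simp
    finally show ?thesis using False by simp
  qed
  have detAY: "det (A * Y) = (-1) ^ (\<Sum>T + \<Sum>T) * det (submatrix (A * Y) (- T) (- T))"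
  proof (rule unit_cols_det[OF AYc T T refl refl])
    fix c i assume c: "c \<in> T" and i: "i < n"
    have "pick T (card {a\<in>T. a < c}) = c" by (rule pick_card_in_set[OF c])
    then show "(A * Y) $$ (i, c) = (if i = pick T (card {a\<in>T. a < c}) then 1 else 0)"
      using AYidx[OF i] c T by auto
  qed
  have sgnT: "((-1::real) ^ (\<Sum>T + \<Sum>T)) = 1"
    by (simp add: power_add neg1_sq)
  have subAY: "submatrix (A * Y) (- T) (- T) = submatrix A ({..<n} - T) ({..<n} - S)"
  proof -
    have e1: "{i. i < dim_row (A * Y) \<and> i \<in> - T} = {i. i < dim_row (A*Y) \<and> i \<in> {..<n} - T}"
      using AYc by auto
    have "submatrix (A * Y) (- T) (- T) = submatrix (A * Y) ({..<n} - T) (- T)"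
      by (rule submatrix_cong_sets[OF e1 refl])
    also have "\<dots> = submatrix A ({..<n} - T) ({..<n} - S)"
    proof (rule eq_matI)
      have cc: "card {j. j < n \<and> j \<in> - T} = card {j. j < n \<and> j \<in> {..<n} - S}"
      proof -
        have "{j. j < n \<and> j \<in> {..<n} - S} = {j. j < n \<and> j \<in> - S}" by auto
        then show ?thesis using card_compl_lt[OF T] card_compl_lt[OF S] card by simp
      qed
      show "dim_row (submatrix (A * Y) ({..<n} - T) (- T)) = dim_row (submatrix A ({..<n} - T) ({..<n} - S))"
        using AYc A by (simp add: dim_submatrix)
      show "dim_col (submatrix (A * Y) ({..<n} - T) (- T)) = dim_col (submatrix A ({..<n} - T) ({..<n} - S))"
        using AYc A cc Yc by (simp add: dim_submatrix)
      fix a b assume "a < dim_row (submatrix A ({..<n} - T) ({..<n} - S))"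
        "b < dim_col (submatrix A ({..<n} - T) ({..<n} - S))"
      then have ab': "a < card {i. i < dim_row A \<and> i \<in> {..<n} - T}" "b < card {j. j < dim_col A \<and> j \<in> {..<n} - S}"
        by (simp_all add: dim_submatrix)
      then have ab: "a < card {i. i < dim_row (A * Y) \<and> i \<in> {..<n} - T}" "b < card {j. j < dim_col (A * Y) \<and> j \<in> - T}"
        using A AYc cc Yc by simp_all
      have pa: "pick ({..<n} - T) a < n" using pick_le[of a n "{..<n} - T"] ab' A by (simp add: conj_commute)
      have pb: "pick (- T) b < n" using pick_le[of b n "- T"] ab AYc Yc by (simp add: conj_commute)
      have infT: "infinite (- T)" using T by (metis Compl_eq_Diff_UNIV finite_Diff2 finite_lessThan infinite_UNIV_nat finite_subset)
      have pbT: "pick (- T) b \<notin> T" using pick_in_set[of b "- T"] infT by simp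
      have cardb: "card {x\<in>U. x < pick (- T) b} = b"
      proof -
        have "{x\<in>U. x < pick (- T) b} = {x\<in>- T. x < pick (- T) b}" using pb by (auto simp: U_def)
        then show ?thesis using card_pick[of b "- T"] infT by simp
      qed
      have pib: "\<pi> (pick (- T) b) = pick ({..<n} - S) b" unfolding \<pi>_def cardb R_def ..
      show "submatrix (A * Y) ({..<n} - T) (- T) $$ (a, b) = submatrix A ({..<n} - T) ({..<n} - S) $$ (a, b)"
        using submatrix_index[OF ab] submatrix_index[OF ab'] AYidx[OF pa pb] pbT pib by simp
    qed
    finally show ?thesis .
  qed
  have "det A * det Y = det (A * Y)" using det_mult[OF A Yc] by simp
  then have "det A * ((-1) ^ (\<Sum>R + \<Sum>U) * det (submatrix B S T)) = det (submatrix A ({..<n} - T) ({..<n} - S))"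
    using detY subY detAY sgnT subAY by simp
  moreover have "(-1::real) ^ (\<Sum>R + \<Sum>U) = hs n S * hs n T"
    unfolding hs_def R_def U_def by (simp add: power_add)
  ultimately show ?thesis by simp
qed




declare continuous_on_product_coordinates[continuous_intros]

definition inner_k :: "nat \<Rightarrow> nat \<Rightarrow> (nat set \<Rightarrow> real) \<Rightarrow> (nat set \<Rightarrow> real) \<Rightarrow> real" where
  "inner_k n j x y = (\<Sum>S\<in>ksub n j. x S * y S)"

definition dual_cone :: "nat \<Rightarrow> nat \<Rightarrow> (nat set \<Rightarrow> real) set \<Rightarrow> (nat set \<Rightarrow> real) set" where
  "dual_cone n j L = {y \<in> ext_space n j. \<forall>x\<in>L. 0 \<le> inner_k n j x y}"

lemma finite_ksub[simp]: "finite (ksub n j)"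
  unfolding ksub_def by (rule finite_subset[of _ "Pow {..<n}"]) auto

lemma cont_inner_left: "continuous_on UNIV (\<lambda>x. inner_k n j x y)"
  unfolding inner_k_def by (intro continuous_intros)

lemma cont_inner_right: "continuous_on UNIV (\<lambda>y. inner_k n j x y)"
  unfolding inner_k_def by (intro continuous_intros)

lemma closed_ext_space: "closed (ext_space n j)"
proof -
  have "ext_space n j = (\<Inter>S\<in>- ksub n j. {x. x S = 0})"
    unfolding ext_space_def by auto
  moreover have "closed {x::nat set \<Rightarrow> real. x S = 0}" for S
    by (rule closed_Collect_eq) (intro continuous_intros)+
  ultimately show ?thesis by auto
qed

lemma ext_nonzero:
  assumes "x \<in> ext_space n j" "x \<noteq> (\<lambda>_. 0)"
  shows "\<exists>S\<in>ksub n j. x S \<noteq> 0"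
proof (rule ccontr)
  assume h: "\<not> (\<exists>S\<in>ksub n j. x S \<noteq> 0)"
  have "x = (\<lambda>_. 0)"
  proof
    fix S show "x S = 0" using h assms(1) by (cases "S \<in> ksub n j") (auto simp: ext_space_def)
  qed
  then show False using assms(2) by simp
qed

lemma ext_eqI:
  assumes "x \<in> ext_space n j" "y \<in> ext_space n j" "\<And>S. S \<in> ksub n j \<Longrightarrow> x S = y S"
  shows "x = y"
proof
  fix S show "x S = y S" using assms by (cases "S \<in> ksub n j") (auto simp: ext_space_def)
qed

lemma pc_sub: "proper_cone n j L \<Longrightarrow> L \<subseteq> ext_space n j"
  unfolding proper_cone_def by auto

lemma pc_comb: "proper_cone n j L \<Longrightarrow> x \<in> L \<Longrightarrow> y \<in> L \<Longrightarrow> a \<ge> 0 \<Longrightarrow> b \<ge> 0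
   \<Longrightarrow> (\<lambda>S. a * x S + b * y S) \<in> L"
  unfolding proper_cone_def by auto

lemma pc_closed: "proper_cone n j L \<Longrightarrow> closed L"
  unfolding proper_cone_def by auto

lemma pc_pointed: "proper_cone n j L \<Longrightarrow> x \<in> L \<Longrightarrow> (\<lambda>S. - x S) \<in> L \<Longrightarrow> x = (\<lambda>_. 0)"
  unfolding proper_cone_def by auto

lemma pc_relint: "proper_cone n j L \<Longrightarrow> rel_int n j L \<noteq> {}"
  unfolding proper_cone_def by auto

lemma rel_int_sub: "rel_int n j L \<subseteq> L"
  unfolding rel_int_def by auto

lemma pc_scale: "proper_cone n j L \<Longrightarrow> x \<in> L \<Longrightarrow> a \<ge> 0 \<Longrightarrow> (\<lambda>S. a * x S) \<in> L"
  using pc_comb[of n j L x x a 0] by simp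

lemma pc_add: "proper_cone n j L \<Longrightarrow> x \<in> L \<Longrightarrow> y \<in> L \<Longrightarrow> (\<lambda>S. x S + y S) \<in> L"
  using pc_comb[of n j L x y 1 1] by simp

lemma pc_zero: "proper_cone n j L \<Longrightarrow> (\<lambda>_. 0) \<in> L"
proof -
  assume pc: "proper_cone n j L"
  then obtain x where "x \<in> L" using pc_relint rel_int_sub by blast
  then show ?thesis using pc_scale[OF pc, of x 0] by simp
qed

lemma compact_box:
  assumes "\<And>i. compact (X i)"
  shows "compact (PiE UNIV X :: ('a \<Rightarrow> real) set)"
proof -
  have "compactin (product_topology (\<lambda>i. euclidean) UNIV) (PiE UNIV X)"
    by (simp add: compactin_PiE assms)
  then show ?thesis by (simp add: euclidean_product_topology)
qed

lemma small_t_nonneg: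
  fixes a b :: real
  assumes "\<And>t. 0 < t \<Longrightarrow> t \<le> 1 \<Longrightarrow> 0 \<le> a + t * b"
  shows "0 \<le> a"
proof (rule ccontr)
  assume a: "\<not> 0 \<le> a"
  show False
  proof (cases "b \<le> 0")
    case True
    then show False using assms[of 1] a by simp
  next
    case False
    define t where "t = min 1 (- a / (2 * b))"
    have t0: "0 < t" unfolding t_def using divide_pos_pos[of "-a" "2*b"] a False by simp
    have t1: "t \<le> 1" by (simp add: t_def)
    have "t * b \<le> (- a / (2 * b)) * b" using False by (intro mult_right_mono) (auto simp: t_def)
    also have "\<dots> = - a / 2" using False by (simp add: field_simps)
    finally have "a + t * b < 0" using a by simp
    then show False using assms[OF t0 t1] by simp
  qed
qed

lemma inner_k_scale_left: "inner_k n j (\<lambda>S. c * x S) y = c * inner_k n j x y"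
  unfolding inner_k_def by (simp add: sum_distrib_left mult.assoc)

definition dist2 :: "nat \<Rightarrow> nat \<Rightarrow> (nat set \<Rightarrow> real) \<Rightarrow> (nat set \<Rightarrow> real) \<Rightarrow> real" where
  "dist2 n j w x = (\<Sum>S\<in>ksub n j. (x S - w S)^2)"

lemma cont_dist2: "continuous_on UNIV (dist2 n j w)"
  unfolding dist2_def by (intro continuous_intros)


lemma coordle:
  assumes "S \<in> ksub n j"
  shows "\<bar>x S - w S\<bar> \<le> sqrt (dist2 n j w x)"
proof -
  have "(x S - w S)^2 \<le> dist2 n j w x" unfolding dist2_def
    by (rule member_le_sum[where f = "\<lambda>S. (x S - w S)^2"]) (use assms in auto)
  then have "sqrt ((x S - w S)^2) \<le> sqrt (dist2 n j w x)" by (rule real_sqrt_le_mono)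
  then show ?thesis by simp
qed


lemma sublevel_box:
  fixes w :: "nat set \<Rightarrow> real" and c :: real
  assumes pc: "proper_cone n j L"
  defines "X \<equiv> (\<lambda>S. if S \<in> ksub n j then {w S - sqrt c .. w S + sqrt c} else {0::real})"
  shows "L \<inter> {x. dist2 n j w x \<le> c} \<subseteq> PiE UNIV X"
proof
  fix x assume x: "x \<in> L \<inter> {x. dist2 n j w x \<le> c}"
  then have xe: "x \<in> ext_space n j" using pc_sub[OF pc] by auto
  have fx: "dist2 n j w x \<le> c" using x by auto
  have xS: "x S \<in> X S" for S
  proof (cases "S \<in> ksub n j")
    case True
    have "\<bar>x S - w S\<bar> \<le> sqrt (dist2 n j w x)" by (rule coordle[OF True])
    also have "\<dots> \<le> sqrt c" by (rule real_sqrt_le_mono[OF fx])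
    finally have "\<bar>x S - w S\<bar> \<le> sqrt c" .
    then have "w S - sqrt c \<le> x S \<and> x S \<le> w S + sqrt c" by linarith
    then show ?thesis using True by (simp add: X_def)
  next
    case False
    then have "x S = 0" using xe by (simp add: ext_space_def)
    then show ?thesis using False by (simp add: X_def)
  qed
  show "x \<in> PiE UNIV X" using xS by (simp add: PiE_iff)
qed


lemma compact_sublevel:
  assumes pc: "proper_cone n j L"
  shows "compact (L \<inter> {x. dist2 n j w x \<le> c})"
proof -
  define X where "X = (\<lambda>S. if S \<in> ksub n j then {w S - sqrt c .. w S + sqrt c} else {0::real})"
  have sub: "L \<inter> {x. dist2 n j w x \<le> c} \<subseteq> PiE UNIV X"
    unfolding X_def by (rule sublevel_box[OF pc])
  have "compact (X S)" for S by (cases "S \<in> ksub n j") (simp_all add: X_def)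
  then have "compact (PiE UNIV X)" by (rule compact_box)
  moreover have "closed (L \<inter> {x. dist2 n j w x \<le> c})"
    by (rule closed_Int[OF pc_closed[OF pc] closed_Collect_le[OF cont_dist2 continuous_on_const]])
  ultimately have "compact (PiE UNIV X \<inter> (L \<inter> {x. dist2 n j w x \<le> c}))"
    by (rule compact_Int_closed)
  then show ?thesis using sub by (simp add: Int_absorb1)
qed


lemma nearest_point:
  assumes pc: "proper_cone n j L"
  shows "\<exists>p\<in>L. \<forall>x\<in>L. dist2 n j w p \<le> dist2 n j w x"
proof -
  define c where "c = dist2 n j w (\<lambda>_. 0)"
  define Kb where "Kb = L \<inter> {x. dist2 n j w x \<le> c}"
  have cK: "compact Kb" unfolding Kb_def by (rule compact_sublevel[OF pc])
  have zKb: "(\<lambda>_. 0) \<in> Kb" using pc_zero[OF pc] by (simp add: Kb_def c_def)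
  then have ne: "Kb \<noteq> {}" by blast
  obtain p where p: "p \<in> Kb" and pm: "\<forall>x\<in>Kb. dist2 n j w p \<le> dist2 n j w x"
    using continuous_attains_inf[OF cK ne continuous_on_subset[OF cont_dist2 subset_UNIV]] by blast
  have "dist2 n j w p \<le> dist2 n j w x" if x: "x \<in> L" for x
  proof (cases "dist2 n j w x \<le> c")
    case True then have "x \<in> Kb" using x by (simp add: Kb_def)
    then show ?thesis using pm by blast
  next
    case False
    have "dist2 n j w p \<le> c" using pm zKb by (simp add: c_def)
    then show ?thesis using False by simp
  qed
  moreover have "p \<in> L" using p by (simp add: Kb_def)
  ultimately show ?thesis by blast
qed


lemma dist2_expand:
  "dist2 n j w (\<lambda>S. p S + t * x S) = dist2 n j w p + t * (2 * (\<Sum>S\<in>ksub n j. x S * (p S - w S)) + t * (\<Sum>S\<in>ksub n j. (x S)^2))"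
proof -
  have pt: "(p S + t * x S - w S)^2 = (p S - w S)^2 + t * (2 * (x S * (p S - w S))) + t * (t * (x S)^2)" for S
    by (simp add: power2_eq_square algebra_simps)
  have "dist2 n j w (\<lambda>S. p S + t * x S) = (\<Sum>S\<in>ksub n j. (p S - w S)^2) + (\<Sum>S\<in>ksub n j. t * (2 * (x S * (p S - w S)))) + (\<Sum>S\<in>ksub n j. t * (t * (x S)^2))"
    unfolding dist2_def pt by (simp add: sum.distrib)
  also have "\<dots> = dist2 n j w p + t * (2 * (\<Sum>S\<in>ksub n j. x S * (p S - w S)) + t * (\<Sum>S\<in>ksub n j. (x S)^2))"
    unfolding dist2_def by (simp add: sum_distrib_left[symmetric] distrib_left)
  finally show ?thesis .
qed


lemma proj_sep:
  assumes pc: "proper_cone n j L" and w: "w \<in> ext_space n j" "w \<notin> L"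
  shows "\<exists>y\<in>dual_cone n j L. inner_k n j w y < 0"
proof -
  let ?I = "ksub n j"
  let ?f = "dist2 n j w"
  obtain p where pL: "p \<in> L" and pmin: "\<And>x. x \<in> L \<Longrightarrow> ?f p \<le> ?f x"
    using nearest_point[OF pc, of w] by blast
  define y where "y = (\<lambda>S. if S \<in> ?I then p S - w S else 0)"
  have ye: "y \<in> ext_space n j" unfolding y_def ext_space_def by auto
  have iy: "inner_k n j x y = (\<Sum>S\<in>?I. x S * (p S - w S))" for x
    unfolding inner_k_def y_def by (rule sum.cong) auto
  have var: "0 \<le> 2 * inner_k n j x y" if h: "\<And>t. 0 < t \<Longrightarrow> t \<le> 1 \<Longrightarrow> (\<lambda>S. p S + t * x S) \<in> L" for x
  proof (rule small_t_nonneg[where b = "\<Sum>S\<in>?I. (x S)^2"])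
    fix t :: real assume t: "0 < t" "t \<le> 1"
    have "?f p \<le> ?f (\<lambda>S. p S + t * x S)" by (rule pmin[OF h[OF t]])
    then have "0 \<le> t * (2 * inner_k n j x y + t * (\<Sum>S\<in>?I. (x S)^2))"
      unfolding dist2_expand iy by simp
    then show "0 \<le> 2 * inner_k n j x y + t * (\<Sum>S\<in>?I. (x S)^2)" using t
      by (simp add: zero_le_mult_iff)
  qed
  have ydual: "y \<in> dual_cone n j L"
  proof -
    have "0 \<le> inner_k n j x y" if x: "x \<in> L" for x
    proof -
      have "0 \<le> 2 * inner_k n j x y"
      proof (rule var)
        fix t :: real assume "0 < t" "t \<le> 1"
        then show "(\<lambda>S. p S + t * x S) \<in> L" using pc_comb[OF pc pL x, of 1 t] by simp
      qed
      then show ?thesis by simp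
    qed
    then show ?thesis using ye by (auto simp: dual_cone_def)
  qed
  have ip0: "inner_k n j p y \<le> 0"
  proof -
    have "0 \<le> 2 * inner_k n j (\<lambda>S. - p S) y"
    proof (rule var)
      fix t :: real assume t: "0 < t" "t \<le> 1"
      have "(\<lambda>S. (1 - t) * p S + 0 * p S) \<in> L" using pc_comb[OF pc pL pL, of "1 - t" 0] t by simp
      moreover have "(\<lambda>S. (1 - t) * p S + 0 * p S) = (\<lambda>S. p S + t * - p S)" by (auto simp: algebra_simps)
      ultimately show "(\<lambda>S. p S + t * - p S) \<in> L" by simp
    qed
    moreover have "inner_k n j (\<lambda>S. - p S) y = - inner_k n j p y"
      using inner_k_scale_left[of n j "-1" p y] by simp
    ultimately show ?thesis by simp
  qed
  have ip1: "0 \<le> inner_k n j p y" using ydual pL by (auto simp: dual_cone_def)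
  have "inner_k n j w y = (\<Sum>S\<in>?I. p S * (p S - w S) - (p S - w S)^2)"
    unfolding iy by (rule sum.cong) (auto simp: power2_eq_square algebra_simps)
  also have "\<dots> = inner_k n j p y - ?f p" unfolding iy dist2_def by (simp add: sum_subtractf)
  finally have wy: "inner_k n j w y = - ?f p" using ip0 ip1 by simp
  have pe: "p \<in> ext_space n j" using pc_sub[OF pc] pL by auto
  have "\<exists>S\<in>?I. p S \<noteq> w S"
  proof (rule ccontr)
    assume "\<not> (\<exists>S\<in>?I. p S \<noteq> w S)"
    then have "p = w" using ext_eqI[OF pe w(1)] by blast
    then show False using pL w(2) by simp
  qed
  then obtain S where S: "S \<in> ?I" "p S \<noteq> w S" by blast
  have "0 < (p S - w S)^2" using S by simp
  also have "\<dots> \<le> ?f p" unfolding dist2_def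
    by (rule member_le_sum[where f = "\<lambda>S. (p S - w S)^2"]) (use S in auto)
  finally have "0 < ?f p" .
  then show ?thesis using ydual wy by (intro bexI[of _ y]) auto
qed





lemma inner_k_zero_left[simp]: "inner_k n j (\<lambda>_. 0) y = 0"
  unfolding inner_k_def by simp

lemma inner_k_comb_right:
  "inner_k n j x (\<lambda>S. a * y1 S + b * y2 S) = a * inner_k n j x y1 + b * inner_k n j x y2"
  unfolding inner_k_def by (simp add: sum.distrib sum_distrib_left algebra_simps)

lemma nrm_pos:
  assumes "x \<in> ext_space n j" "x \<noteq> (\<lambda>_. 0)"
  shows "0 < (\<Sum>S\<in>ksub n j. \<bar>x S\<bar>)"
proof -
  obtain S where S: "S \<in> ksub n j" "x S \<noteq> 0" using ext_nonzero[OF assms] by blast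
  have "\<bar>x S\<bar> \<le> (\<Sum>S\<in>ksub n j. \<bar>x S\<bar>)"
    by (rule member_le_sum[where f = "\<lambda>S. \<bar>x S\<bar>"]) (use S in auto)
  then show ?thesis using S by simp
qed

lemma inner_pos_relint:
  assumes pc: "proper_cone n j L" and u: "u \<in> rel_int n j L"
    and y: "y \<in> dual_cone n j L" "y \<noteq> (\<lambda>_. 0)"
  shows "0 < inner_k n j u y"
proof -
  have ye: "y \<in> ext_space n j" using y by (simp add: dual_cone_def)
  obtain S0 where S0: "S0 \<in> ksub n j" "y S0 \<noteq> 0" using ext_nonzero[OF ye y(2)] by blast
  obtain e where e: "e > 0" "\<forall>z\<in>ext_space n j. (\<forall>S\<in>ksub n j. \<bar>z S - u S\<bar> < e) \<longrightarrow> z \<in> L"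
    and uL: "u \<in> L" using u unfolding rel_int_def by blast
  have ue: "u \<in> ext_space n j" using pc_sub[OF pc] uL by auto
  define z where "z = (\<lambda>S. u S - (if S = S0 then e/2 * sgn (y S0) else 0))"
  have ze: "z \<in> ext_space n j" using ue S0(1) by (auto simp: z_def ext_space_def)
  have "\<forall>S\<in>ksub n j. \<bar>z S - u S\<bar> < e" using e(1) S0(2) by (auto simp: z_def abs_mult abs_sgn_eq)
  then have zL: "z \<in> L" using e(2) ze by blast
  have "0 \<le> inner_k n j z y" using y zL by (auto simp: dual_cone_def)
  moreover have "inner_k n j z y = inner_k n j u y - e/2 * \<bar>y S0\<bar>"
  proof -
    have "inner_k n j z y = (\<Sum>S\<in>ksub n j. u S * y S - (if S = S0 then e/2 * sgn (y S0) * y S0 else 0))"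
      unfolding inner_k_def z_def by (rule sum.cong) (auto simp: algebra_simps)
    also have "\<dots> = inner_k n j u y - e/2 * sgn (y S0) * y S0"
      using S0(1) by (simp add: sum_subtractf inner_k_def)
    finally have "inner_k n j z y = inner_k n j u y - e/2 * sgn (y S0) * y S0" .
    moreover have "sgn (y S0) * y S0 = \<bar>y S0\<bar>" by (simp add: abs_sgn mult.commute)
    ultimately show ?thesis by (simp add: mult.assoc)
  qed
  ultimately have "e/2 * \<bar>y S0\<bar> \<le> inner_k n j u y" by simp
  moreover have "0 < e/2 * \<bar>y S0\<bar>" using e(1) S0(2) by simp
  ultimately show ?thesis by linarith
qed

lemma normalize_in_cone:
  assumes pc: "proper_cone n j L" and x: "x \<in> L" "x \<noteq> (\<lambda>_. 0)"
  defines "s \<equiv> (\<Sum>S\<in>ksub n j. \<bar>x S\<bar>)"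
  shows "0 < s" "(\<lambda>S. (1/s) * x S) \<in> L" "(\<Sum>S\<in>ksub n j. \<bar>(1/s) * x S\<bar>) = 1"
    "\<And>y. inner_k n j x y = s * inner_k n j (\<lambda>S. (1/s) * x S) y"
proof -
  have xe: "x \<in> ext_space n j" using pc_sub[OF pc] x by auto
  show s0: "0 < s" unfolding s_def by (rule nrm_pos[OF xe x(2)])
  show "(\<lambda>S. (1/s) * x S) \<in> L" using pc_scale[OF pc x(1), of "1/s"] s0 by simp
  show "(\<Sum>S\<in>ksub n j. \<bar>(1/s) * x S\<bar>) = 1"
    using s0 by (simp add: abs_mult s_def sum_divide_distrib[symmetric])
  fix y show "inner_k n j x y = s * inner_k n j (\<lambda>S. (1/s) * x S) y"
    unfolding inner_k_scale_left using s0 by simp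
qed

lemma compact_Q:
  assumes pc: "proper_cone n j L"
  shows "compact (L \<inter> {x. (\<Sum>S\<in>ksub n j. \<bar>x S\<bar>) = 1})"
proof -
  let ?I = "ksub n j"
  define X where "X S = (if S \<in> ?I then {-1..1} else {0::real})" for S
  have sub: "L \<inter> {x. (\<Sum>S\<in>?I. \<bar>x S\<bar>) = 1} \<subseteq> PiE UNIV X"
  proof
    fix x assume x: "x \<in> L \<inter> {x. (\<Sum>S\<in>?I. \<bar>x S\<bar>) = 1}"
    then have xe: "x \<in> ext_space n j" using pc_sub[OF pc] by auto
    have "x S \<in> X S" for S
    proof (cases "S \<in> ?I")
      case True
      have "\<bar>x S\<bar> \<le> (\<Sum>S\<in>?I. \<bar>x S\<bar>)"
        by (rule member_le_sum[where f = "\<lambda>S. \<bar>x S\<bar>"]) (use True in auto)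
      then show ?thesis using True x by (auto simp: X_def abs_le_iff)
    next
      case False then show ?thesis using xe by (auto simp: X_def ext_space_def)
    qed
    then show "x \<in> PiE UNIV X" by auto
  qed
  have "compact (PiE UNIV X)" by (rule compact_box) (simp add: X_def)
  moreover have "closed (L \<inter> {x. (\<Sum>S\<in>?I. \<bar>x S\<bar>) = 1})"
    by (rule closed_Int[OF pc_closed[OF pc] closed_Collect_eq]) (intro continuous_intros)+
  ultimately have "compact (PiE UNIV X \<inter> (L \<inter> {x. (\<Sum>S\<in>?I. \<bar>x S\<bar>) = 1}))"
    by (rule compact_Int_closed)
  then show ?thesis using sub by (simp add: Int_absorb1)
qed

lemma pos_functional_relint:
  assumes pc: "proper_cone n j L" and ye: "y \<in> ext_space n j"
    and pos: "\<And>x. x \<in> L \<Longrightarrow> x \<noteq> (\<lambda>_. 0) \<Longrightarrow> 0 < inner_k n j x y"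
  shows "y \<in> rel_int n j (dual_cone n j L)"
proof -
  let ?I = "ksub n j"
  define Q where "Q = L \<inter> {x. (\<Sum>S\<in>?I. \<bar>x S\<bar>) = 1}"
  have cQ: "compact Q" unfolding Q_def by (rule compact_Q[OF pc])
  have ydual: "y \<in> dual_cone n j L"
  proof -
    have "0 \<le> inner_k n j x y" if "x \<in> L" for x
      using pos[OF that] by (cases "x = (\<lambda>_. 0)") auto
    then show ?thesis using ye by (auto simp: dual_cone_def)
  qed
  show ?thesis
  proof (cases "Q = {}")
    case True
    have L0: "x = (\<lambda>_. 0)" if "x \<in> L" for x
    proof (rule ccontr)
      assume "x \<noteq> (\<lambda>_. 0)"
      then have "(\<lambda>S. (1/(\<Sum>S\<in>?I. \<bar>x S\<bar>)) * x S) \<in> Q"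
        using normalize_in_cone[OF pc that] by (auto simp: Q_def)
      then show False using True by simp
    qed
    have "\<forall>y'\<in>ext_space n j. (\<forall>S\<in>?I. \<bar>y' S - y S\<bar> < 1) \<longrightarrow> y' \<in> dual_cone n j L"
    proof (intro ballI impI)
      fix y' assume y': "y' \<in> ext_space n j"
      have "0 \<le> inner_k n j x y'" if "x \<in> L" for x
        using L0[OF that] by simp
      then show "y' \<in> dual_cone n j L" using y' by (simp add: dual_cone_def)
    qed
    then show ?thesis using ydual unfolding rel_int_def by (auto intro!: exI[of _ 1])
  next
    case False
    obtain p where p: "p \<in> Q" "\<And>q. q \<in> Q \<Longrightarrow> inner_k n j p y \<le> inner_k n j q y"
      using continuous_attains_inf[OF cQ False continuous_on_subset[OF cont_inner_left]] by blast
    have pL: "p \<in> L" and pn: "(\<Sum>S\<in>?I. \<bar>p S\<bar>) = 1" using p(1) Q_def by auto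
    have "p \<noteq> (\<lambda>_. 0)" using pn by auto
    then have c0: "0 < inner_k n j p y" using pos[OF pL] by simp
    define c where "c = inner_k n j p y"
    have "\<forall>y'\<in>ext_space n j. (\<forall>S\<in>?I. \<bar>y' S - y S\<bar> < c) \<longrightarrow> y' \<in> dual_cone n j L"
    proof (intro ballI impI)
      fix y' assume y'e: "y' \<in> ext_space n j" and cl: "\<forall>S\<in>?I. \<bar>y' S - y S\<bar> < c"
      have "0 \<le> inner_k n j x y'" if xL: "x \<in> L" for x
      proof (cases "x = (\<lambda>_. 0)")
        case True then show ?thesis by simp
      next
        case False
        define s where "s = (\<Sum>S\<in>?I. \<bar>x S\<bar>)"
        define xs where "xs = (\<lambda>S. (1/s) * x S)"
        have s0: "0 < s" and xsL: "xs \<in> L" and xsn: "(\<Sum>S\<in>?I. \<bar>xs S\<bar>) = 1"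
          and ixs: "inner_k n j x y' = s * inner_k n j xs y'"
          using normalize_in_cone[OF pc xL False] by (simp_all add: s_def xs_def)
        have xsQ: "xs \<in> Q" using xsL xsn by (simp add: Q_def)
        have ge: "c \<le> inner_k n j xs y" using p(2)[OF xsQ] by (simp add: c_def)
        have split: "inner_k n j xs y' = inner_k n j xs y + (\<Sum>S\<in>?I. xs S * (y' S - y S))"
          unfolding inner_k_def by (simp add: sum.distrib[symmetric] algebra_simps)
        have "\<bar>\<Sum>S\<in>?I. xs S * (y' S - y S)\<bar> \<le> (\<Sum>S\<in>?I. \<bar>xs S\<bar> * c)"
        proof (rule order_trans[OF sum_abs], rule sum_mono)
          fix S assume "S \<in> ?I"
          then have "\<bar>y' S - y S\<bar> \<le> c" using cl by (simp add: less_imp_le)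
          then show "\<bar>xs S * (y' S - y S)\<bar> \<le> \<bar>xs S\<bar> * c"
            by (simp add: abs_mult mult_left_mono)
        qed
        also have "\<dots> = c" using xsn by (simp add: sum_distrib_right[symmetric])
        finally have "0 \<le> inner_k n j xs y'" using split ge by linarith
        then show ?thesis using ixs s0 by simp
      qed
      then show "y' \<in> dual_cone n j L" using y'e by (simp add: dual_cone_def)
    qed
    then show ?thesis using ydual c0 unfolding rel_int_def c_def by blast
  qed
qed

lemma inner_k_neg_left: "inner_k n j (\<lambda>S. - x S) y = - inner_k n j x y"
  using inner_k_scale_left[of n j "-1" x y] by simp

lemma pos_functional_exists:
  assumes pc: "proper_cone n j L"
  shows "\<exists>y\<in>ext_space n j. \<forall>x\<in>L. x \<noteq> (\<lambda>_. 0) \<longrightarrow> 0 < inner_k n j x y"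
proof -
  let ?I = "ksub n j"
  define Q where "Q = L \<inter> {x. (\<Sum>S\<in>?I. \<bar>x S\<bar>) = 1}"
  have cQ: "compact Q" unfolding Q_def by (rule compact_Q[OF pc])
  have sep: "\<exists>y. y \<in> dual_cone n j L \<and> 0 < inner_k n j q y" if q: "q \<in> Q" for q
  proof -
    have qL: "q \<in> L" and qn: "(\<Sum>S\<in>?I. \<bar>q S\<bar>) = 1" using q Q_def by auto
    have qnz: "q \<noteq> (\<lambda>_. 0)" using qn by auto
    have qe: "q \<in> ext_space n j" using pc_sub[OF pc] qL by auto
    have mqe: "(\<lambda>S. - q S) \<in> ext_space n j" using qe by (auto simp: ext_space_def)
    have "(\<lambda>S. - q S) \<notin> L" using pc_pointed[OF pc qL] qnz by auto
    then obtain y where "y \<in> dual_cone n j L" "inner_k n j (\<lambda>S. - q S) y < 0"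
      using proj_sep[OF pc mqe] by blast
    then show ?thesis using inner_k_neg_left[of n j q y] by auto
  qed
  then obtain Y where Y: "\<And>q. q \<in> Q \<Longrightarrow> Y q \<in> dual_cone n j L \<and> 0 < inner_k n j q (Y q)"
    by metis
  have cov: "Q \<subseteq> (\<Union>q\<in>Q. {x. 0 < inner_k n j x (Y q)})" using Y by auto
  have opn: "open {x. 0 < inner_k n j x (Y q)}" for q
    by (rule open_Collect_less[OF continuous_on_const cont_inner_left])
  obtain C where C: "C \<subseteq> Q" "finite C" "Q \<subseteq> (\<Union>q\<in>C. {x. 0 < inner_k n j x (Y q)})"
    using compactE_image[OF cQ opn cov] by metis
  define y where "y = (\<lambda>S. \<Sum>q\<in>C. Y q S)"
  have ye: "y \<in> ext_space n j"
    unfolding ext_space_def y_def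
  proof (intro CollectI allI impI sum.neutral ballI)
    fix S q assume "S \<notin> ksub n j" "q \<in> C"
    then show "Y q S = 0" using Y[of q] C(1) by (auto simp: dual_cone_def ext_space_def)
  qed
  have isum: "inner_k n j x y = (\<Sum>q\<in>C. inner_k n j x (Y q))" for x
    unfolding inner_k_def y_def by (simp add: sum_distrib_left sum.swap[of _ C])
  have "0 < inner_k n j x y" if xL: "x \<in> L" and xnz: "x \<noteq> (\<lambda>_. 0)" for x
  proof -
    define s where "s = (\<Sum>S\<in>?I. \<bar>x S\<bar>)"
    define xs where "xs = (\<lambda>S. (1/s) * x S)"
    have s0: "0 < s" and xsL: "xs \<in> L" and xsn: "(\<Sum>S\<in>?I. \<bar>xs S\<bar>) = 1"
      and ixs: "inner_k n j x y = s * inner_k n j xs y"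
      using normalize_in_cone[OF pc xL xnz] by (simp_all add: s_def xs_def)
    have xsQ: "xs \<in> Q" using xsL xsn by (simp add: Q_def)
    then obtain q0 where q0: "q0 \<in> C" "0 < inner_k n j xs (Y q0)" using C(3) by blast
    have nn: "0 \<le> inner_k n j xs (Y q)" if "q \<in> C" for q
      using Y[of q] C(1) that xsL by (auto simp: dual_cone_def)
    have "inner_k n j xs (Y q0) \<le> (\<Sum>q\<in>C. inner_k n j xs (Y q))"
      by (rule member_le_sum[where f = "\<lambda>q. inner_k n j xs (Y q)"]) (use q0 nn C(2) in auto)
    then have "0 < inner_k n j xs y" using q0 isum by simp
    then show ?thesis using ixs s0 by simp
  qed
  then show ?thesis using ye by blast
qed

lemma dual_proper:
  assumes pc: "proper_cone n j L"
  shows "proper_cone n j (dual_cone n j L)"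
  unfolding proper_cone_def
proof (intro conjI)
  show "dual_cone n j L \<subseteq> ext_space n j" by (auto simp: dual_cone_def)
  show "\<forall>x\<in>dual_cone n j L. \<forall>y\<in>dual_cone n j L. \<forall>a\<ge>0. \<forall>b\<ge>0.
          (\<lambda>S. a * x S + b * y S) \<in> dual_cone n j L"
    by (auto simp: dual_cone_def ext_space_def inner_k_comb_right)
  have "dual_cone n j L = ext_space n j \<inter> (\<Inter>x\<in>L. {y. 0 \<le> inner_k n j x y})"
    by (auto simp: dual_cone_def)
  moreover have "closed (ext_space n j \<inter> (\<Inter>x\<in>L. {y. 0 \<le> inner_k n j x y}))"
    by (intro closed_Int closed_ext_space closed_INT ballI closed_Collect_le continuous_on_const cont_inner_right)
  ultimately show "closed (dual_cone n j L)" by simp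
  show "\<forall>x\<in>dual_cone n j L. (\<lambda>S. - x S) \<in> dual_cone n j L \<longrightarrow> x = (\<lambda>_. 0)"
  proof (intro ballI impI)
    fix y assume y: "y \<in> dual_cone n j L" and my: "(\<lambda>S. - y S) \<in> dual_cone n j L"
    show "y = (\<lambda>_. 0)"
    proof (rule ccontr)
      assume ynz: "y \<noteq> (\<lambda>_. 0)"
      obtain u where u: "u \<in> rel_int n j L" using pc_relint[OF pc] by blast
      have "0 < inner_k n j u y" by (rule inner_pos_relint[OF pc u y ynz])
      moreover have "0 \<le> inner_k n j u (\<lambda>S. - y S)" using my u rel_int_sub[of n j L] by (auto simp: dual_cone_def)
      moreover have "inner_k n j u (\<lambda>S. - y S) = - inner_k n j u y"
        unfolding inner_k_def by (simp add: sum_negf)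
      ultimately show False by simp
    qed
  qed
  obtain y where "y \<in> ext_space n j" "\<forall>x\<in>L. x \<noteq> (\<lambda>_. 0) \<longrightarrow> 0 < inner_k n j x y"
    using pos_functional_exists[OF pc] by blast
  then have "y \<in> rel_int n j (dual_cone n j L)" using pos_functional_relint[OF pc] by blast
  then show "rel_int n j (dual_cone n j L) \<noteq> {}" by blast
qed

definition lin_map :: "nat \<Rightarrow> nat \<Rightarrow> (nat set \<Rightarrow> nat set \<Rightarrow> real) \<Rightarrow> (nat set \<Rightarrow> real) \<Rightarrow> (nat set \<Rightarrow> real)" where
  "lin_map n j a x = (\<lambda>S. if S \<in> ksub n j then \<Sum>T\<in>ksub n j. a S T * x T else 0)"

lemma lin_map_ext: "lin_map n j a x \<in> ext_space n j"
  unfolding lin_map_def ext_space_def by auto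

lemma lin_map_adj: "inner_k n j x (lin_map n j a y) = inner_k n j (lin_map n j (\<lambda>S T. a T S) x) y"
proof -
  have "inner_k n j x (lin_map n j a y) = (\<Sum>S\<in>ksub n j. \<Sum>T\<in>ksub n j. x S * (a S T * y T))"
    unfolding inner_k_def lin_map_def by (simp add: sum_distrib_left)
  also have "\<dots> = (\<Sum>T\<in>ksub n j. \<Sum>S\<in>ksub n j. x S * (a S T * y T))" by (rule sum.swap)
  also have "\<dots> = (\<Sum>T\<in>ksub n j. \<Sum>S\<in>ksub n j. a S T * x S * y T)"
    by (intro sum.cong refl) (simp add: algebra_simps)
  also have "\<dots> = (\<Sum>T\<in>ksub n j. (\<Sum>S\<in>ksub n j. a S T * x S) * y T)"
    by (simp add: sum_distrib_right)
  also have "\<dots> = inner_k n j (lin_map n j (\<lambda>S T. a T S) x) y"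
    unfolding inner_k_def lin_map_def by (rule sum.cong) auto
  finally show ?thesis .
qed

lemma dual_nonneg:
  assumes "\<And>z. z \<in> L \<Longrightarrow> lin_map n j (\<lambda>S T. a T S) z \<in> L" and y: "y \<in> dual_cone n j L"
  shows "lin_map n j a y \<in> dual_cone n j L"
  using assms lin_map_ext unfolding dual_cone_def by (auto simp: lin_map_adj)

lemma dual_pos:
  assumes pc: "proper_cone n j L"
    and h: "\<And>z. z \<in> L \<Longrightarrow> z \<noteq> (\<lambda>_. 0) \<Longrightarrow> lin_map n j (\<lambda>S T. a T S) z \<in> rel_int n j L"
    and y: "y \<in> dual_cone n j L" "y \<noteq> (\<lambda>_. 0)"
  shows "lin_map n j a y \<in> rel_int n j (dual_cone n j L)"
proof (rule pos_functional_relint[OF pc lin_map_ext])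
  fix x assume "x \<in> L" "x \<noteq> (\<lambda>_. 0)"
  then have "lin_map n j (\<lambda>S T. a T S) x \<in> rel_int n j L" by (rule h)
  then show "0 < inner_k n j x (lin_map n j a y)"
    unfolding lin_map_adj by (rule inner_pos_relint[OF pc _ y])
qed




lemma ksub_fin_sub: "S \<in> ksub n j \<Longrightarrow> S \<subseteq> {..<n} \<and> finite S \<and> card S = j"
  unfolding ksub_def by (auto intro: finite_subset)

lemma ksub_compl:
  assumes "S \<in> ksub n j"
  shows "{..<n} - S \<in> ksub n (n - j)"
  using assms unfolding ksub_def by (auto simp: card_Diff_subset finite_subset)

lemma compl_compl: "S \<subseteq> {..<n} \<Longrightarrow> {..<n} - ({..<n} - S) = S"
  by auto

lemma ksub_cc: "W \<in> ksub n m \<Longrightarrow> {..<n} - ({..<n} - W) = W"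
  unfolding ksub_def by auto

lemma ksub_compl2:
  assumes "W \<in> ksub n (n - j)" "j \<le> n"
  shows "{..<n} - W \<in> ksub n j"
proof -
  have "{..<n} - W \<in> ksub n (n - (n - j))" by (rule ksub_compl[OF assms(1)])
  then show ?thesis using assms(2) by simp
qed

lemma sum_ksub_compl:
  assumes "j \<le> n"
  shows "(\<Sum>W\<in>ksub n (n - j). g W) = (\<Sum>T\<in>ksub n j. g ({..<n} - T))"
  by (rule sum.reindex_bij_witness[of _ "\<lambda>T. {..<n} - T" "\<lambda>W. {..<n} - W"])
     (auto simp: ksub_cc ksub_compl ksub_compl2[OF _ assms])

definition Pinv :: "nat \<Rightarrow> nat \<Rightarrow> (nat set \<Rightarrow> real) \<Rightarrow> (nat set \<Rightarrow> real)" where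
  "Pinv n j z = (\<lambda>U. if U \<in> ksub n (n - j) then hs n ({..<n} - U) * z ({..<n} - U) else 0)"

definition Pfw :: "nat \<Rightarrow> nat \<Rightarrow> (nat set \<Rightarrow> real) \<Rightarrow> (nat set \<Rightarrow> real)" where
  "Pfw n j w = (\<lambda>S. if S \<in> ksub n j then hs n S * w ({..<n} - S) else 0)"

definition Lpre :: "nat \<Rightarrow> nat \<Rightarrow> (nat set \<Rightarrow> real) set \<Rightarrow> (nat set \<Rightarrow> real) set" where
  "Lpre n j K = {z \<in> ext_space n j. Pinv n j z \<in> K}"

lemma Pinv_ext: "Pinv n j z \<in> ext_space n (n - j)"
  unfolding Pinv_def ext_space_def by auto

lemma Pfw_ext: "Pfw n j w \<in> ext_space n j"
  unfolding Pfw_def ext_space_def by auto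

lemma Pfw_Pinv:
  assumes "j \<le> n" "z \<in> ext_space n j"
  shows "Pfw n j (Pinv n j z) = z"
proof
  fix S show "Pfw n j (Pinv n j z) S = z S"
  proof (cases "S \<in> ksub n j")
    case True
    have "{..<n} - S \<in> ksub n (n - j)" by (rule ksub_compl[OF True])
    moreover have "{..<n} - ({..<n} - S) = S" using True by (auto simp: ksub_def)
    ultimately show ?thesis using True by (simp add: Pfw_def Pinv_def mult.assoc[symmetric])
  next
    case False then show ?thesis using assms(2) by (simp add: Pfw_def ext_space_def)
  qed
qed

lemma Pinv_Pfw:
  assumes "j \<le> n" "w \<in> ext_space n (n - j)"
  shows "Pinv n j (Pfw n j w) = w"
proof
  fix U show "Pinv n j (Pfw n j w) U = w U"
  proof (cases "U \<in> ksub n (n - j)")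
    case True
    have "{..<n} - U \<in> ksub n (n - (n - j))" by (rule ksub_compl[OF True])
    then have c: "{..<n} - U \<in> ksub n j" using assms(1) by simp
    have "{..<n} - ({..<n} - U) = U" using True by (auto simp: ksub_def)
    then show ?thesis using True c by (simp add: Pfw_def Pinv_def mult.assoc[symmetric])
  next
    case False then show ?thesis using assms(2) by (simp add: Pinv_def ext_space_def)
  qed
qed

lemma Pinv_comb: "Pinv n j (\<lambda>S. a * x S + b * y S) = (\<lambda>U. a * Pinv n j x U + b * Pinv n j y U)"
  unfolding Pinv_def by (auto simp: algebra_simps)

lemma Pinv_scale: "Pinv n j (\<lambda>S. a * x S) = (\<lambda>U. a * Pinv n j x U)"
  unfolding Pinv_def by auto

lemma Pinv_cont: "continuous_on UNIV (Pinv n j)"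
  unfolding Pinv_def
proof (intro continuous_on_coordinatewise_then_product)
  fix U
  show "continuous_on UNIV (\<lambda>z. if U \<in> ksub n (n - j) then hs n ({..<n} - U) * z ({..<n} - U) else 0)"
    by (cases "U \<in> ksub n (n - j)") (auto intro!: continuous_intros)
qed

lemma relint_transfer:
  assumes jn: "j \<le> n" and w: "w \<in> rel_int n (n - j) K" and Ksub: "K \<subseteq> ext_space n (n - j)"
  shows "Pfw n j w \<in> rel_int n j (Lpre n j K)"
proof -
  obtain e where e: "e > 0" "\<forall>y\<in>ext_space n (n - j). (\<forall>S\<in>ksub n (n - j). \<bar>y S - w S\<bar> < e) \<longrightarrow> y \<in> K"
    and wK: "w \<in> K" using w unfolding rel_int_def by blast
  have we: "w \<in> ext_space n (n - j)" using wK Ksub by auto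
  have inL: "Pfw n j w \<in> Lpre n j K" using Pinv_Pfw[OF jn we] wK Pfw_ext by (simp add: Lpre_def)
  have "\<forall>y\<in>ext_space n j. (\<forall>S\<in>ksub n j. \<bar>y S - Pfw n j w S\<bar> < e) \<longrightarrow> y \<in> Lpre n j K"
  proof (intro ballI impI)
    fix y assume ye: "y \<in> ext_space n j" and cl: "\<forall>S\<in>ksub n j. \<bar>y S - Pfw n j w S\<bar> < e"
    have close: "\<bar>Pinv n j y U - w U\<bar> < e" if U: "U \<in> ksub n (n - j)" for U
    proof -
      have "{..<n} - U \<in> ksub n (n - (n - j))" by (rule ksub_compl[OF U])
      then have c: "{..<n} - U \<in> ksub n j" using jn by simp
      have cc: "{..<n} - ({..<n} - U) = U" using U by (auto simp: ksub_def)
      have hs1: "\<bar>hs n ({..<n} - U)\<bar> = 1" unfolding hs_def by simp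
      have "Pinv n j y U - w U = hs n ({..<n} - U) * (y ({..<n} - U) - Pfw n j w ({..<n} - U))"
        using U c cc by (simp add: Pinv_def Pfw_def algebra_simps mult.assoc[symmetric])
      then have "\<bar>Pinv n j y U - w U\<bar> = \<bar>y ({..<n} - U) - Pfw n j w ({..<n} - U)\<bar>"
        by (simp add: abs_mult hs1)
      then show ?thesis using cl c by simp
    qed
    have "Pinv n j y \<in> K"
      by (rule e(2)[rule_format, OF Pinv_ext]) (use close in blast)
    then show "y \<in> Lpre n j K" using ye by (simp add: Lpre_def)
  qed
  then show ?thesis using inL e(1) unfolding rel_int_def by blast
qed

lemma Lpre_proper:
  assumes jn: "j \<le> n" and pc: "proper_cone n (n - j) K"
  shows "proper_cone n j (Lpre n j K)"
  unfolding proper_cone_def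
proof (intro conjI)
  show "Lpre n j K \<subseteq> ext_space n j" by (auto simp: Lpre_def)
  show "\<forall>x\<in>Lpre n j K. \<forall>y\<in>Lpre n j K. \<forall>a\<ge>0. \<forall>b\<ge>0. (\<lambda>S. a * x S + b * y S) \<in> Lpre n j K"
    using pc_comb[OF pc] by (auto simp: Lpre_def Pinv_comb ext_space_def)
  have "Lpre n j K = ext_space n j \<inter> (Pinv n j -` K)" by (auto simp: Lpre_def)
  moreover have "closed (ext_space n j \<inter> (Pinv n j -` K))"
    by (intro closed_Int closed_ext_space closed_vimage[OF pc_closed[OF pc] Pinv_cont])
  ultimately show "closed (Lpre n j K)" by simp
  show "\<forall>x\<in>Lpre n j K. (\<lambda>S. - x S) \<in> Lpre n j K \<longrightarrow> x = (\<lambda>_. 0)"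
  proof (intro ballI impI)
    fix x assume x: "x \<in> Lpre n j K" and mx: "(\<lambda>S. - x S) \<in> Lpre n j K"
    have xe: "x \<in> ext_space n j" using x by (simp add: Lpre_def)
    have "Pinv n j (\<lambda>S. - x S) = (\<lambda>U. - Pinv n j x U)" using Pinv_scale[of n j "-1" x] by simp
    then have "Pinv n j x = (\<lambda>_. 0)" using pc_pointed[OF pc] x mx by (simp add: Lpre_def)
    then have "Pfw n j (Pinv n j x) = (\<lambda>_. 0)" by (simp add: Pfw_def fun_eq_iff)
    then show "x = (\<lambda>_. 0)" using Pfw_Pinv[OF jn xe] by simp
  qed
  obtain w where "w \<in> rel_int n (n - j) K" using pc_relint[OF pc] by blast
  then have "Pfw n j w \<in> rel_int n j (Lpre n j K)" by (rule relint_transfer[OF jn _ pc_sub[OF pc]])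
  then show "rel_int n j (Lpre n j K) \<noteq> {}" by blast
qed

lemma relint_scale:
  assumes pc: "proper_cone n j K" and x: "x \<in> rel_int n j K" and c: "c > 0"
  shows "(\<lambda>S. c * x S) \<in> rel_int n j K"
proof -
  obtain e where e: "e > 0" "\<forall>y\<in>ext_space n j. (\<forall>S\<in>ksub n j. \<bar>y S - x S\<bar> < e) \<longrightarrow> y \<in> K"
    and xK: "x \<in> K" using x unfolding rel_int_def by blast
  have "\<forall>y\<in>ext_space n j. (\<forall>S\<in>ksub n j. \<bar>y S - c * x S\<bar> < c * e) \<longrightarrow> y \<in> K"
  proof (intro ballI impI)
    fix y assume ye: "y \<in> ext_space n j" and cl: "\<forall>S\<in>ksub n j. \<bar>y S - c * x S\<bar> < c * e"
    have ye': "(\<lambda>S. (1/c) * y S) \<in> ext_space n j" using ye by (simp add: ext_space_def)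
    have close: "\<bar>(1/c) * y S - x S\<bar> < e" if "S \<in> ksub n j" for S
    proof -
      have eq: "(1/c) * (y S - c * x S) = (1/c) * y S - x S" using c by (simp add: right_diff_distrib)
      have lt: "\<bar>y S - c * x S\<bar> < c * e" using cl that by blast
      have "\<bar>(1/c) * y S - x S\<bar> = (1/c) * \<bar>y S - c * x S\<bar>"
        unfolding eq[symmetric] abs_mult using c by simp
      also have "\<dots> < (1/c) * (c * e)" by (rule mult_strict_left_mono[OF lt]) (use c in simp)
      also have "\<dots> = e" using c by simp
      finally show ?thesis .
    qed
    have yK: "(\<lambda>S. (1/c) * y S) \<in> K"
      by (rule e(2)[rule_format, OF ye']) (use close in blast)
    have "(\<lambda>S. c * ((1/c) * y S)) \<in> K" by (rule pc_scale[OF pc yK]) (use c in simp)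
    moreover have "(\<lambda>S. c * ((1/c) * y S)) = y" using c by (simp add: fun_eq_iff)
    ultimately show "y \<in> K" by simp
  qed
  moreover have "(\<lambda>S. c * x S) \<in> K" by (rule pc_scale[OF pc xK]) (use c in simp)
  moreover have "c * e > 0" using c e(1) by simp
  ultimately show ?thesis unfolding rel_int_def by blast
qed

lemma compound_lin_map:
  "(\<lambda>x S. c * compound n j B x S) = lin_map n j (\<lambda>S T. c * det (submatrix B S T))"
  unfolding compound_def lin_map_def by (auto simp: sum_distrib_left mult.assoc intro!: ext)

lemma det_nonzero:
  fixes A B :: "real mat"
  assumes A: "A \<in> carrier_mat n n" and B: "B \<in> carrier_mat n n" and AB: "A * B = 1\<^sub>m n"
  shows "det A \<noteq> 0"
proof -
  have "det A * det B = 1" using det_mult[OF A B] AB by simp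
  then show ?thesis by auto
qed

lemma key_identity:
  fixes A B :: "real mat"
  assumes A: "A \<in> carrier_mat n n" and B: "B \<in> carrier_mat n n" and AB: "A * B = 1\<^sub>m n"
    and jn: "j \<le> n"
  shows "Pinv n j (lin_map n j (\<lambda>S T. c * det (submatrix B T S)) z)
       = (\<lambda>U. (c / det A) * compound n (n - j) A (Pinv n j z) U)"
proof
  fix U
  have dA: "det A \<noteq> 0" by (rule det_nonzero[OF A B AB])
  show "Pinv n j (lin_map n j (\<lambda>S T. c * det (submatrix B T S)) z) U
       = (c / det A) * compound n (n - j) A (Pinv n j z) U"
  proof (cases "U \<in> ksub n (n - j)")
    case False then show ?thesis by (simp add: Pinv_def compound_def)
  next
    case True
    define S0 where "S0 = {..<n} - U"
    have "S0 \<in> ksub n (n - (n - j))" unfolding S0_def by (rule ksub_compl[OF True])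
    then have S0k: "S0 \<in> ksub n j" using jn by simp
    have US0: "{..<n} - S0 = U" using True by (auto simp: ksub_def S0_def)
    have jac: "hs n S0 * det (submatrix B T S0) = hs n T * det (submatrix A U ({..<n} - T)) / det A"
      if T: "T \<in> ksub n j" for T
    proof -
      have "det A * (hs n T * hs n S0 * det (submatrix B T S0))
          = det (submatrix A ({..<n} - S0) ({..<n} - T))"
        by (rule jacobi[OF A B AB]) (use T S0k in \<open>auto simp: ksub_def\<close>)
      then have "det A * (hs n T * hs n S0 * det (submatrix B T S0)) = det (submatrix A U ({..<n} - T))"
        using US0 by simp
      then have "hs n T * (hs n T * hs n S0 * det (submatrix B T S0)) = hs n T * det (submatrix A U ({..<n} - T)) / det A"
        using dA by (simp add: field_simps)
      then show ?thesis by (simp add: mult.assoc[symmetric])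
    qed
    have "Pinv n j (lin_map n j (\<lambda>S T. c * det (submatrix B T S)) z) U
        = hs n S0 * (\<Sum>T\<in>ksub n j. c * det (submatrix B T S0) * z T)"
      using True S0k by (simp add: Pinv_def lin_map_def S0_def)
    also have "\<dots> = (\<Sum>T\<in>ksub n j. c * (hs n S0 * det (submatrix B T S0)) * z T)"
      by (simp add: sum_distrib_left algebra_simps)
    also have "\<dots> = (\<Sum>T\<in>ksub n j. c * (hs n T * det (submatrix A U ({..<n} - T)) / det A) * z T)"
      by (rule sum.cong) (simp_all add: jac)
    also have "\<dots> = (c / det A) * (\<Sum>T\<in>ksub n j. det (submatrix A U ({..<n} - T)) * (hs n T * z T))"
      by (simp add: sum_distrib_left algebra_simps)
    also have "\<dots> = (c / det A) * (\<Sum>W\<in>ksub n (n - j). det (submatrix A U W) * Pinv n j z W)"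
    proof -
      have "(\<Sum>W\<in>ksub n (n - j). det (submatrix A U W) * Pinv n j z W)
          = (\<Sum>T\<in>ksub n j. det (submatrix A U ({..<n} - T)) * Pinv n j z ({..<n} - T))"
        by (rule sum_ksub_compl[OF jn])
      also have "\<dots> = (\<Sum>T\<in>ksub n j. det (submatrix A U ({..<n} - T)) * (hs n T * z T))"
      proof (rule sum.cong[OF refl])
        fix T assume T: "T \<in> ksub n j"
        have "{..<n} - T \<in> ksub n (n - j)" by (rule ksub_compl[OF T])
        moreover have "{..<n} - ({..<n} - T) = T" using T by (auto simp: ksub_def)
        ultimately show "det (submatrix A U ({..<n} - T)) * Pinv n j z ({..<n} - T)
            = det (submatrix A U ({..<n} - T)) * (hs n T * z T)" by (simp add: Pinv_def)
      qed
      finally show ?thesis by simp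
    qed
    also have "\<dots> = (c / det A) * compound n (n - j) A (Pinv n j z) U"
      using True by (simp add: compound_def)
    finally show ?thesis .
  qed
qed




definition ray0 :: "nat \<Rightarrow> (nat set \<Rightarrow> real) set" where
  "ray0 n = {x \<in> ext_space n 0. 0 \<le> x {}}"

lemma ksub0: "ksub n 0 = {{}}"
proof
  show "ksub n 0 \<subseteq> {{}}"
  proof
    fix S assume "S \<in> ksub n 0"
    then have "S \<subseteq> {..<n}" "card S = 0" by (auto simp: ksub_def)
    moreover then have "finite S" by (meson finite_lessThan finite_subset)
    ultimately show "S \<in> {{}}" by simp
  qed
  show "{{}} \<subseteq> ksub n 0" by (auto simp: ksub_def)
qed

lemma ext0_eq: "x \<in> ext_space n 0 \<Longrightarrow> S \<noteq> {} \<Longrightarrow> x S = 0"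
  by (simp add: ext_space_def ksub0)

lemma ext0_ext: "x \<in> ext_space n 0 \<Longrightarrow> y \<in> ext_space n 0 \<Longrightarrow> x {} = y {} \<Longrightarrow> x = y"
proof
  fix S assume "x \<in> ext_space n 0" "y \<in> ext_space n 0" "x {} = y {}"
  then show "x S = y S" by (cases "S = {}") (auto simp: ext0_eq)
qed

lemma ray0_relint:
  assumes x: "x \<in> ray0 n" "x \<noteq> (\<lambda>_. 0)"
  shows "x \<in> rel_int n 0 (ray0 n)"
proof -
  have xe: "x \<in> ext_space n 0" and x0: "0 \<le> x {}" using x by (auto simp: ray0_def)
  have "x {} \<noteq> 0"
  proof
    assume "x {} = 0"
    then have "x = (\<lambda>_. 0)" using ext0_ext[OF xe, of "\<lambda>_. 0"] by (simp add: ext_space_def)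
    then show False using x(2) by simp
  qed
  then have xp: "0 < x {}" using x0 by simp
  have "\<forall>y\<in>ext_space n 0. (\<forall>S\<in>ksub n 0. \<bar>y S - x S\<bar> < x {}) \<longrightarrow> y \<in> ray0 n"
  proof (intro ballI impI)
    fix y assume y: "y \<in> ext_space n 0" "\<forall>S\<in>ksub n 0. \<bar>y S - x S\<bar> < x {}"
    then have "\<bar>y {} - x {}\<bar> < x {}" by (simp add: ksub0)
    then have "0 \<le> y {}" by linarith
    then show "y \<in> ray0 n" using y by (simp add: ray0_def)
  qed
  then show ?thesis using x(1) xp unfolding rel_int_def by blast
qed

lemma ray0_proper: "proper_cone n 0 (ray0 n)"
  unfolding proper_cone_def
proof (intro conjI)
  show "ray0 n \<subseteq> ext_space n 0" by (auto simp: ray0_def)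
  show "\<forall>x\<in>ray0 n. \<forall>y\<in>ray0 n. \<forall>a\<ge>0. \<forall>b\<ge>0. (\<lambda>S. a * x S + b * y S) \<in> ray0 n"
    by (auto simp: ray0_def ext_space_def)
  have "ray0 n = ext_space n 0 \<inter> {x. (\<lambda>x. 0) x \<le> (\<lambda>x. x {}) x}" by (auto simp: ray0_def)
  moreover have "closed (ext_space n 0 \<inter> {x. (\<lambda>x. 0) x \<le> (\<lambda>x::nat set \<Rightarrow> real. x {}) x})"
    by (intro closed_Int closed_ext_space closed_Collect_le continuous_on_const continuous_on_product_coordinates)
  ultimately show "closed (ray0 n)" by simp
  show "\<forall>x\<in>ray0 n. (\<lambda>S. - x S) \<in> ray0 n \<longrightarrow> x = (\<lambda>_. 0)"
  proof (intro ballI impI)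
    fix x assume "x \<in> ray0 n" "(\<lambda>S. - x S) \<in> ray0 n"
    then have "x \<in> ext_space n 0" "x {} = 0" by (auto simp: ray0_def)
    then show "x = (\<lambda>_. 0)" using ext0_ext[of x n "\<lambda>_. 0"] by (simp add: ext_space_def)
  qed
  define v where "v = (\<lambda>S::nat set. if S = {} then 1 else (0::real))"
  have "v \<in> ray0 n" by (simp add: v_def ray0_def ext_space_def ksub0)
  moreover have "v \<noteq> (\<lambda>_. 0)" by (auto simp: v_def fun_eq_iff)
  ultimately have "v \<in> rel_int n 0 (ray0 n)" by (rule ray0_relint)
  then show "rel_int n 0 (ray0 n) \<noteq> {}" by blast
qed

lemma det_sub_empty: "det (submatrix A {} {}) = (1::real)"
proof -
  have l1: "dim_row (submatrix A {} {}) = 0" "dim_col (submatrix A {} {}) = 0"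
    by (simp_all add: dim_submatrix)
  have "submatrix A {} {} \<in> carrier_mat 0 0" by (rule carrier_matI[OF l1])
  then show ?thesis by (rule det_dim_zero)
qed

lemma compound0:
  assumes x: "x \<in> ext_space n 0"
  shows "compound n 0 A x = x"
proof
  fix S
  show "compound n 0 A x S = x S"
  proof (cases "S = {}")
    case True
    have "compound n 0 A x S = (\<Sum>T\<in>{{}}. det (submatrix A S T) * x T)"
      using True unfolding compound_def ksub0 by simp
    also have "\<dots> = x S" using True det_sub_empty[of A] by simp
    finally show ?thesis .
  next
    case False
    then have "compound n 0 A x S = 0" unfolding compound_def ksub0 by simp
    also have "0 = x S" using ext0_eq[OF x False] by simp
    finally show ?thesis .
  qed
qed

lemma compound_zero: "compound n j A (\<lambda>_. 0) = (\<lambda>_. 0)"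
  by (simp add: compound_def fun_eq_iff)

definition Kz :: "nat \<Rightarrow> (nat \<Rightarrow> (nat set \<Rightarrow> real) set) \<Rightarrow> nat \<Rightarrow> (nat set \<Rightarrow> real) set" where
  "Kz n Ks m = (if m = 0 then ray0 n else Ks m)"

definition ez :: "(nat \<Rightarrow> real) \<Rightarrow> nat \<Rightarrow> real" where
  "ez \<epsilon> m = (if m = 0 then 1 else \<epsilon> m)"

definition Kdual :: "nat \<Rightarrow> (nat \<Rightarrow> (nat set \<Rightarrow> real) set) \<Rightarrow> nat \<Rightarrow> (nat set \<Rightarrow> real) set" where
  "Kdual n Ks j = dual_cone n j (Lpre n j (Kz n Ks (n - j)))"

lemma Kz_proper:
  assumes tp: "tp_structure n Ks" and j: "j \<in> {1..n}"
  shows "proper_cone n (n - j) (Kz n Ks (n - j))"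
proof (cases "n - j = 0")
  case True then show ?thesis by (simp add: Kz_def ray0_proper)
next
  case False
  then have "n - j \<in> {1..n}" by auto
  then show ?thesis using tp False by (simp add: Kz_def tp_structure_def)
qed

lemma core_proper:
  assumes tp: "tp_structure n Ks"
  shows "tp_structure n (Kdual n Ks)"
  unfolding tp_structure_def
proof
  fix j assume j: "j \<in> {1..n}"
  then have jn: "j \<le> n" by simp
  show "proper_cone n j (Kdual n Ks j)"
    unfolding Kdual_def by (intro dual_proper Lpre_proper[OF jn] Kz_proper[OF tp j])
qed

lemma sgn_div:
  fixes d e :: real
  assumes "d \<noteq> 0"
  shows "(e * sgn d) / d = (1 / \<bar>d\<bar>) * e"
  using assms by (cases "d > 0") (auto simp: sgn_if)

lemma Kz_nonneg:
  assumes A: "A \<in> carrier_mat n n" and j: "j \<in> {1..n}"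
    and H: "\<forall>j\<in>{1..n}. K_nonneg (Ks j) (\<lambda>x S. \<epsilon> j * compound n j A x S)"
  shows "K_nonneg (Kz n Ks (n - j)) (\<lambda>x S. ez \<epsilon> (n - j) * compound n (n - j) A x S)"
proof (cases "n - j = 0")
  case True
  show ?thesis unfolding K_nonneg_def
  proof
    fix x assume "x \<in> Kz n Ks (n - j)"
    then have "x \<in> ray0 n" using True by (simp add: Kz_def)
    moreover then have "compound n 0 A x = x" using compound0 by (simp add: ray0_def)
    ultimately show "(\<lambda>S. ez \<epsilon> (n - j) * compound n (n - j) A x S) \<in> Kz n Ks (n - j)"
      using True by (simp add: Kz_def ez_def)
  qed
next
  case False
  then have "n - j \<in> {1..n}" by auto
  then show ?thesis using H False by (simp add: Kz_def ez_def)
qed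

lemma Kz_pos:
  assumes A: "A \<in> carrier_mat n n" and j: "j \<in> {1..n}"
    and H: "\<forall>j\<in>{1..n}. K_pos n j (Ks j) (\<lambda>x S. \<epsilon> j * compound n j A x S)"
  shows "K_pos n (n - j) (Kz n Ks (n - j)) (\<lambda>x S. ez \<epsilon> (n - j) * compound n (n - j) A x S)"
proof (cases "n - j = 0")
  case True
  show ?thesis unfolding K_pos_def
  proof
    fix x assume "x \<in> Kz n Ks (n - j) - {\<lambda>_. 0}"
    then have x: "x \<in> ray0 n" "x \<noteq> (\<lambda>_. 0)" using True by (auto simp: Kz_def)
    moreover then have "compound n 0 A x = x" using compound0 by (simp add: ray0_def)
    ultimately show "(\<lambda>S. ez \<epsilon> (n - j) * compound n (n - j) A x S) \<in> rel_int n (n - j) (Kz n Ks (n - j))"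
      using True ray0_relint[OF x] by (simp add: Kz_def ez_def)
  qed
next
  case False
  then have "n - j \<in> {1..n}" by auto
  then show ?thesis using H False by (simp add: Kz_def ez_def)
qed

lemma core_map:
  fixes A B :: "real mat"
  assumes A: "A \<in> carrier_mat n n" and B: "B \<in> carrier_mat n n" and AB: "A * B = 1\<^sub>m n"
    and jn: "j \<le> n"
  shows "Pinv n j (lin_map n j (\<lambda>S T. (e * sgn (det A)) * det (submatrix B T S)) z)
       = (\<lambda>U. (1 / \<bar>det A\<bar>) * (e * compound n (n - j) A (Pinv n j z) U))"
proof -
  have dA: "det A \<noteq> 0" by (rule det_nonzero[OF A B AB])
  show ?thesis
    unfolding key_identity[OF A B AB jn] sgn_div[OF dA] by (simp add: mult.assoc)
qed

lemma core_nonneg: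
  fixes A B :: "real mat"
  assumes A: "A \<in> carrier_mat n n" and B: "B \<in> carrier_mat n n" and AB: "A * B = 1\<^sub>m n"
    and tp: "tp_structure n Ks" and j: "j \<in> {1..n}"
    and H: "\<forall>j\<in>{1..n}. K_nonneg (Ks j) (\<lambda>x S. \<epsilon> j * compound n j A x S)"
  shows "K_nonneg (Kdual n Ks j) (\<lambda>x S. (ez \<epsilon> (n - j) * sgn (det A)) * compound n j B x S)"
proof -
  have jn: "j \<le> n" using j by simp
  let ?K = "Kz n Ks (n - j)"
  let ?e = "ez \<epsilon> (n - j)"
  have pc: "proper_cone n (n - j) ?K" by (rule Kz_proper[OF tp j])
  have Hz: "K_nonneg ?K (\<lambda>x S. ?e * compound n (n - j) A x S)" by (rule Kz_nonneg[OF A j H])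
  have "\<forall>y\<in>Kdual n Ks j. lin_map n j (\<lambda>S T. (?e * sgn (det A)) * det (submatrix B S T)) y \<in> Kdual n Ks j"
    unfolding Kdual_def
  proof
    fix y assume y: "y \<in> dual_cone n j (Lpre n j ?K)"
    show "lin_map n j (\<lambda>S T. (?e * sgn (det A)) * det (submatrix B S T)) y \<in> dual_cone n j (Lpre n j ?K)"
    proof (rule dual_nonneg[OF _ y])
      fix z assume z: "z \<in> Lpre n j ?K"
      then have "Pinv n j z \<in> ?K" by (simp add: Lpre_def)
      then have "(\<lambda>S. ?e * compound n (n - j) A (Pinv n j z) S) \<in> ?K" using Hz by (simp add: K_nonneg_def)
      then have "(\<lambda>U. (1 / \<bar>det A\<bar>) * (?e * compound n (n - j) A (Pinv n j z) U)) \<in> ?K"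
        by (rule pc_scale[OF pc]) simp
      then show "lin_map n j (\<lambda>S T. (?e * sgn (det A)) * det (submatrix B T S)) z \<in> Lpre n j ?K"
        unfolding Lpre_def using core_map[OF A B AB jn] lin_map_ext by simp
    qed
  qed
  then show ?thesis unfolding K_nonneg_def compound_lin_map .
qed

lemma core_pos:
  fixes A B :: "real mat"
  assumes A: "A \<in> carrier_mat n n" and B: "B \<in> carrier_mat n n" and AB: "A * B = 1\<^sub>m n"
    and tp: "tp_structure n Ks" and j: "j \<in> {1..n}"
    and H: "\<forall>j\<in>{1..n}. K_pos n j (Ks j) (\<lambda>x S. \<epsilon> j * compound n j A x S)"
  shows "K_pos n j (Kdual n Ks j) (\<lambda>x S. (ez \<epsilon> (n - j) * sgn (det A)) * compound n j B x S)"
proof -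
  have jn: "j \<le> n" using j by simp
  let ?K = "Kz n Ks (n - j)"
  let ?e = "ez \<epsilon> (n - j)"
  have pc: "proper_cone n (n - j) ?K" by (rule Kz_proper[OF tp j])
  have pcL: "proper_cone n j (Lpre n j ?K)" by (rule Lpre_proper[OF jn pc])
  have Hz: "K_pos n (n - j) ?K (\<lambda>x S. ?e * compound n (n - j) A x S)" by (rule Kz_pos[OF A j H])
  have dA: "det A \<noteq> 0" by (rule det_nonzero[OF A B AB])
  have "\<forall>y\<in>Kdual n Ks j - {\<lambda>_. 0}. lin_map n j (\<lambda>S T. (?e * sgn (det A)) * det (submatrix B S T)) y \<in> rel_int n j (Kdual n Ks j)"
    unfolding Kdual_def
  proof
    fix y assume y: "y \<in> dual_cone n j (Lpre n j ?K) - {\<lambda>_. 0}"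
    show "lin_map n j (\<lambda>S T. (?e * sgn (det A)) * det (submatrix B S T)) y \<in> rel_int n j (dual_cone n j (Lpre n j ?K))"
    proof (rule dual_pos[OF pcL _ _])
      show "y \<in> dual_cone n j (Lpre n j ?K)" "y \<noteq> (\<lambda>_. 0)" using y by auto
    next
      fix z assume z: "z \<in> Lpre n j ?K" and znz: "z \<noteq> (\<lambda>_. 0)"
      have ze: "z \<in> ext_space n j" using z by (simp add: Lpre_def)
      have PzK: "Pinv n j z \<in> ?K" using z by (simp add: Lpre_def)
      have Pnz: "Pinv n j z \<noteq> (\<lambda>_. 0)"
      proof
        assume "Pinv n j z = (\<lambda>_. 0)"
        then have "Pfw n j (Pinv n j z) = (\<lambda>_. 0)" by (simp add: Pfw_def fun_eq_iff)
        then show False using Pfw_Pinv[OF jn ze] znz by simp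
      qed
      have "(\<lambda>S. ?e * compound n (n - j) A (Pinv n j z) S) \<in> rel_int n (n - j) ?K"
        using Hz PzK Pnz by (simp add: K_pos_def)
      then have w: "(\<lambda>U. (1 / \<bar>det A\<bar>) * (?e * compound n (n - j) A (Pinv n j z) U)) \<in> rel_int n (n - j) ?K"
        by (rule relint_scale[OF pc]) (use dA in simp)
      define M where "M = lin_map n j (\<lambda>S T. (?e * sgn (det A)) * det (submatrix B T S)) z"
      have PM: "Pinv n j M = (\<lambda>U. (1 / \<bar>det A\<bar>) * (?e * compound n (n - j) A (Pinv n j z) U))"
        unfolding M_def by (rule core_map[OF A B AB jn])
      have "M = Pfw n j (Pinv n j M)" using Pfw_Pinv[OF jn lin_map_ext] by (simp add: M_def)
      also have "\<dots> \<in> rel_int n j (Lpre n j ?K)"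
        unfolding PM by (rule relint_transfer[OF jn w pc_sub[OF pc]])
      finally show "lin_map n j (\<lambda>S T. (?e * sgn (det A)) * det (submatrix B T S)) z \<in> rel_int n j (Lpre n j ?K)"
        by (simp add: M_def)
    qed
  qed
  then show ?thesis unfolding K_pos_def compound_lin_map .
qed

lemma ksubn: "ksub n n = {{..<n}}"
proof
  show "ksub n n \<subseteq> {{..<n}}"
  proof
    fix S assume "S \<in> ksub n n"
    then have "S \<subseteq> {..<n}" "card S = n" by (auto simp: ksub_def)
    then have "S = {..<n}" using card_subset_eq[of "{..<n}" S] by simp
    then show "S \<in> {{..<n}}" by simp
  qed
  show "{{..<n}} \<subseteq> ksub n n" by (auto simp: ksub_def)
qed

lemma det_pos_of_nonneg:
  fixes A :: "real mat"
  assumes A: "A \<in> carrier_mat n n" and dA: "det A \<noteq> 0"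
    and pc: "proper_cone n n K" and H: "K_nonneg K (compound n n A)"
  shows "det A > 0"
proof (rule ccontr)
  assume "\<not> det A > 0"
  then have neg: "det A < 0" using dA by simp
  let ?N = "{..<n}"
  have subA: "submatrix A ?N ?N = A"
  proof -
    have "submatrix A ?N ?N = submatrix A UNIV UNIV"
      by (rule submatrix_cong_sets) (use A in auto)
    then show ?thesis by (simp add: submatrix_UNIV)
  qed
  have comp: "compound n n A x = (\<lambda>S. det A * x S)" if x: "x \<in> ext_space n n" for x
  proof
    fix S show "compound n n A x S = det A * x S"
      using x by (cases "S = ?N") (auto simp: compound_def ksubn subA ext_space_def)
  qed
  obtain u e where uK: "u \<in> K" and e: "e > 0"
    and ball: "\<forall>y\<in>ext_space n n. (\<forall>S\<in>ksub n n. \<bar>y S - u S\<bar> < e) \<longrightarrow> y \<in> K"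
    using pc_relint[OF pc] unfolding rel_int_def by blast
  have ue: "u \<in> ext_space n n" using pc_sub[OF pc] uK by auto
  define vp where "vp = (\<lambda>S. u S + (if S = ?N then e/2 else 0))"
  define vm where "vm = (\<lambda>S. u S - (if S = ?N then e/2 else 0))"
  have vpK: "vp \<in> K"
  proof (rule ball[rule_format])
    show "vp \<in> ext_space n n" using ue by (auto simp: vp_def ext_space_def ksubn)
    fix S assume "S \<in> ksub n n"
    then show "\<bar>vp S - u S\<bar> < e" using e by (auto simp: vp_def ksubn)
  qed
  have vmK: "vm \<in> K"
  proof (rule ball[rule_format])
    show "vm \<in> ext_space n n" using ue by (auto simp: vm_def ext_space_def ksubn)
    fix S assume "S \<in> ksub n n"
    then show "\<bar>vm S - u S\<bar> < e" using e by (auto simp: vm_def ksubn)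
  qed
  have "\<exists>x\<in>K. x ?N \<noteq> 0"
  proof (cases "vp ?N = 0")
    case True
    then have "vm ?N \<noteq> 0" using e by (simp add: vp_def vm_def)
    then show ?thesis using vmK by blast
  next
    case False then show ?thesis using vpK by blast
  qed
  then obtain x where xK: "x \<in> K" and xN: "x ?N \<noteq> 0" by blast
  have xe: "x \<in> ext_space n n" using pc_sub[OF pc] xK by auto
  have "compound n n A x \<in> K" using H xK by (simp add: K_nonneg_def)
  then have "(\<lambda>S. det A * x S) \<in> K" using comp[OF xe] by simp
  then have "(\<lambda>S. (1 / - det A) * (det A * x S)) \<in> K" by (rule pc_scale[OF pc]) (use neg in simp)
  moreover have "(\<lambda>S. (1 / - det A) * (det A * x S)) = (\<lambda>S. - x S)" using neg by (simp add: fun_eq_iff)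
  ultimately have "(\<lambda>S. - x S) \<in> K" by simp
  then have "x = (\<lambda>_. 0)" by (rule pc_pointed[OF pc xK])
  then show False using xN by simp
qed

lemma pos_imp_nonneg:
  assumes pc: "proper_cone n j K" and H: "K_pos n j K (compound n j A)"
  shows "K_nonneg K (compound n j A)"
  unfolding K_nonneg_def
proof
  fix x assume x: "x \<in> K"
  show "compound n j A x \<in> K"
  proof (cases "x = (\<lambda>_. 0)")
    case True then show ?thesis using pc_zero[OF pc] by (simp add: compound_zero)
  next
    case False
    then have "compound n j A x \<in> rel_int n j K" using H x by (simp add: K_pos_def)
    then show ?thesis using rel_int_sub by blast
  qed
qed

lemma sign_pm1:
  assumes "\<forall>j\<in>{1..n}. \<epsilon> j \<in> {-1, 1}" "j \<in> {1..n}" "(d::real) \<noteq> 0"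
  shows "ez \<epsilon> (n - j) * sgn d \<in> {-1, 1}"
proof -
  have "ez \<epsilon> (n - j) \<in> {-1, 1}"
  proof (cases "n - j = 0")
    case True then show ?thesis by (simp add: ez_def)
  next
    case False
    then have "n - j \<in> {1..n}" by auto
    then show ?thesis using assms(1) False by (simp add: ez_def)
  qed
  moreover have "sgn d \<in> {-1, 1}" using assms(3) by (cases "d > 0") (auto simp: sgn_if)
  ultimately show ?thesis by auto
qed

theorem proposition20:
  fixes n :: nat and A B :: "real mat"
  assumes "A \<in> carrier_mat n n" and "B \<in> carrier_mat n n"
    and "A * B = 1\<^sub>m n" and "B * A = 1\<^sub>m n"
  shows "(\<forall>Ks. tp_structure n Ks \<and> GSR n Ks A \<longrightarrow>
            (\<exists>Ks'. tp_structure n Ks' \<and> GSR n Ks' B))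
       \<and> (\<forall>Ks. tp_structure n Ks \<and> GSSR n Ks A \<longrightarrow>
            (\<exists>Ks'. tp_structure n Ks' \<and> GSSR n Ks' B))
       \<and> (\<forall>Ks. tp_structure n Ks \<and> GTP n Ks A \<longrightarrow>
            (\<exists>Ks'. tp_structure n Ks' \<and> GTP n Ks' B))
       \<and> (\<forall>Ks. tp_structure n Ks \<and> GSTP n Ks A \<longrightarrow>
            (\<exists>Ks'. tp_structure n Ks' \<and> GSTP n Ks' B))"
proof -
  note A = assms(1) and B = assms(2) and AB = assms(3)
  have dA: "det A \<noteq> 0" by (rule det_nonzero[OF A B AB])
  have P1: "\<exists>Ks'. tp_structure n Ks' \<and> GSR n Ks' B" if tp: "tp_structure n Ks" and g: "GSR n Ks A" for Ks
  proof -
    obtain \<epsilon> where e: "\<forall>j\<in>{1..n}. \<epsilon> j \<in> {-1, 1} \<and> K_nonneg (Ks j) (\<lambda>x S. \<epsilon> j * compound n j A x S)"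
      using g unfolding GSR_def by blast
    have "GSR n (Kdual n Ks) B"
      unfolding GSR_def
    proof (intro exI[of _ "\<lambda>j. ez \<epsilon> (n - j) * sgn (det A)"] ballI conjI)
      fix j assume j: "j \<in> {1..n}"
      show "ez \<epsilon> (n - j) * sgn (det A) \<in> {-1, 1}" using sign_pm1[OF _ j dA] e by blast
      show "K_nonneg (Kdual n Ks j) (\<lambda>x S. (ez \<epsilon> (n - j) * sgn (det A)) * compound n j B x S)"
        by (rule core_nonneg[OF A B AB tp j]) (use e in blast)
    qed
    then show ?thesis using core_proper[OF tp] by blast
  qed
  have P2: "\<exists>Ks'. tp_structure n Ks' \<and> GSSR n Ks' B" if tp: "tp_structure n Ks" and g: "GSSR n Ks A" for Ks
  proof -
    obtain \<epsilon> where e: "\<forall>j\<in>{1..n}. \<epsilon> j \<in> {-1, 1} \<and> K_pos n j (Ks j) (\<lambda>x S. \<epsilon> j * compound n j A x S)"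
      using g unfolding GSSR_def by blast
    have "GSSR n (Kdual n Ks) B"
      unfolding GSSR_def
    proof (intro exI[of _ "\<lambda>j. ez \<epsilon> (n - j) * sgn (det A)"] ballI conjI)
      fix j assume j: "j \<in> {1..n}"
      show "ez \<epsilon> (n - j) * sgn (det A) \<in> {-1, 1}" using sign_pm1[OF _ j dA] e by blast
      show "K_pos n j (Kdual n Ks j) (\<lambda>x S. (ez \<epsilon> (n - j) * sgn (det A)) * compound n j B x S)"
        by (rule core_pos[OF A B AB tp j]) (use e in blast)
    qed
    then show ?thesis using core_proper[OF tp] by blast
  qed
  have P3: "\<exists>Ks'. tp_structure n Ks' \<and> GTP n Ks' B" if tp: "tp_structure n Ks" and g: "GTP n Ks A" for Ks
  proof -
    have H: "\<forall>j\<in>{1..n}. K_nonneg (Ks j) (\<lambda>x S. (\<lambda>_. 1::real) j * compound n j A x S)"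
      using g by (simp add: GTP_def)
    have "GTP n (Kdual n Ks) B"
      unfolding GTP_def
    proof
      fix j assume j: "j \<in> {1..n}"
      have n1: "n \<in> {1..n}" using j by auto
      have "det A > 0"
        by (rule det_pos_of_nonneg[OF A dA]) (use tp n1 g in \<open>auto simp: tp_structure_def GTP_def\<close>)
      then have s: "ez (\<lambda>_. 1) (n - j) * sgn (det A) = 1" by (simp add: ez_def)
      have "K_nonneg (Kdual n Ks j) (\<lambda>x S. (ez (\<lambda>_. 1) (n - j) * sgn (det A)) * compound n j B x S)"
        by (rule core_nonneg[OF A B AB tp j H])
      then show "K_nonneg (Kdual n Ks j) (compound n j B)" unfolding s by simp
    qed
    then show ?thesis using core_proper[OF tp] by blast
  qed
  have P4: "\<exists>Ks'. tp_structure n Ks' \<and> GSTP n Ks' B" if tp: "tp_structure n Ks" and g: "GSTP n Ks A" for Ks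
  proof -
    have H: "\<forall>j\<in>{1..n}. K_pos n j (Ks j) (\<lambda>x S. (\<lambda>_. 1::real) j * compound n j A x S)"
      using g by (simp add: GSTP_def)
    have "GSTP n (Kdual n Ks) B"
      unfolding GSTP_def
    proof
      fix j assume j: "j \<in> {1..n}"
      have n1: "n \<in> {1..n}" using j by auto
      have pcn: "proper_cone n n (Ks n)" using tp n1 by (simp add: tp_structure_def)
      have "K_pos n n (Ks n) (compound n n A)" using g n1 by (simp add: GSTP_def)
      then have "K_nonneg (Ks n) (compound n n A)" by (rule pos_imp_nonneg[OF pcn])
      then have "det A > 0" by (rule det_pos_of_nonneg[OF A dA pcn])
      then have s: "ez (\<lambda>_. 1) (n - j) * sgn (det A) = 1" by (simp add: ez_def)
      have "K_pos n j (Kdual n Ks j) (\<lambda>x S. (ez (\<lambda>_. 1) (n - j) * sgn (det A)) * compound n j B x S)"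
        by (rule core_pos[OF A B AB tp j H])
      then show "K_pos n j (Kdual n Ks j) (compound n j B)" unfolding s by simp
    qed
    then show ?thesis using core_proper[OF tp] by blast
  qed
  show ?thesis using P1 P2 P3 P4 by blast
qed


end
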